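(* Let $R$ be a monad on Sets and $LM$ a left $R$-module with values in Sets. A pair of subsets $C\subset\coprod_{n\ge0}\prod_{i=0}^{n-1}LM([i])$ and $\widetilde{C}\subset\coprod_{n\ge0}(\prod_{i=0}^{n}LM([i]))\times R([n])$ corresponds to a C-subsystem of $CC(R,LM)$ (i.e. there is a C-subsystem $CC$ with $Ob(CC)=C$ and $\widetilde{Ob}(CC)=\widetilde{C}$) if and only if the following conditions hold, for all sequences and elements for which the expressions are well formed (with $n=l(\Gamma)$ throughout): (1) $(\rhd_C)$, i.e. the empty sequence is in $C$; (2) $(\Gamma,T\rhd_C)\Rightarrow(\Gamma\rhd_C)$; (3) $(\Gamma\vdash_{\widetilde C}r:R)\Rightarrow(\Gamma,R\rhd_C)$; (4) $(\Gamma,T\rhd_C)\wedge(\Gamma,\Delta\vdash_{\widetilde C}r:R)\Rightarrow(\Gamma,T,t_{n+1}(\Delta)\vdash_{\widetilde C}t_{n+1}(r):t_{n+1}(R))$; (5) $(\Gamma\vdash_{\widetilde C}s:S)\wedge(\Gamma,S,\Delta\vdash_{\widetilde C}r:R)\Rightarrow(\Gamma,s_{n+1}(\Delta[s/n+1])\vdash_{\widetilde C}s_{n+1}(r[s/n+1]):s_{n+1}(R[s/n+1]))$; (6) $(\Gamma,T\rhd_C)\Rightarrow(\Gamma,T\vdash_{\widetilde C}n+1:t_{n+1}(T))$.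
   Context: Notation: $[n]=\{1,\dots,n\}$. $R$ is a monad on Sets given by $\eta_X:X\to R(X)$ and $\mathrm{bind}(f):R(X)\to R(Y)$ for $f:X\to R(Y)$ (with $\mathrm{bind}(\eta_X)=\mathrm{id}$, $\mathrm{bind}(f)\circ\eta_X=f$, $\mathrm{bind}(\mathrm{bind}(g)\circ f)=\mathrm{bind}(g)\circ\mathrm{bind}(f)$); $LM$ is a left $R$-module: a functor with maps $\rho(f):LM(X)\to LM(Y)$, $\rho(\eta_X)=\mathrm{id}$, $\rho(g)\circ\rho(f)=\rho(\mathrm{bind}(g)\circ f)$. Elements of $Y$ are regarded in $R(Y)$ via $\eta_Y$. For $E\in LM([m])$ (resp. $R([m])$), $E(f_1/1,\dots,f_m/m)$ means $\rho(f)(E)$ (resp. $\mathrm{bind}(f)(E)$) with $f(i)=f_i$. For $E\in LM([m])$ or $R([m])$ with $m\ge n$: $t_{n+1}(E):=E(1/1,\dots,n/n,n+2/n+1,\dots,m+1/m)\in LM([m+1])$ (resp. $R([m+1])$). For $m\ge n+1$ and $s\in R([n])$ (regarded in $R([m-1])$ via $[n]\subset[m-1]$): $s_{n+1}(E[s/n+1]):=E(1/1,\dots,n/n,s/n+1,n+1/n+2,\dots,m-1/m)\in LM([m-1])$ (resp. $R([m-1])$). These are applied componentwise to sequences $\Delta=(D_1,\dots,D_k)$. $CC(R,LM)$: objects are sequences $\Gamma=(T_1,\dots,T_n)$ with $T_i\in LM([i-1])$, $l(\Gamma)=n$, $ft(T_1,\dots,T_n)=(T_1,\dots,T_{n-1})$,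 $pt=()$; morphisms $(E_1,\dots,E_m)\to(T_1,\dots,T_n)$ are elements of $R([m])^n$, the composite of $f=(f_1,\dots,f_n)$ followed by $g=(g_1,\dots,g_k)$ being $(g_j(f_1/1,\dots,f_n/n))_j$, identities $(1,\dots,n)$; $p_X=(1,\dots,n):(T_1,\dots,T_{n+1})\to(T_1,\dots,T_n)$; for $X=(T_1,\dots,T_{n+1})$ and $f=(f_1,\dots,f_n):(R_1,\dots,R_m)\to ft(X)$, $f^*X=(R_1,\dots,R_m,T_{n+1}(f_1/1,\dots,f_n/n))$ and $q(f,X)=(f_1,\dots,f_n,m+1)$. $\widetilde{Ob}$ of a subcategory is its set of morphisms $s:ft(X)\to X$ with $l(X)>0$, $p_X\circ s=\mathrm{id}$; the section $(1,\dots,n,t):(T_1,\dots,T_n)\to(T_1,\dots,T_n,T)$ ($T\in LM([n])$, $t\in R([n])$) is identified with the sequence $(T_1,\dots,T_n,T,t)$. A C-subsystem of $CC(R,LM)$ is a subcategory $CC$ containing $pt$ such that for every object $X$ of $CC$ with $l(X)>0$: $ft(X)$ and $p_X$ are in $CC$; for every morphism $f:Y\to ft(X)$ of $CC$, $f^*X$ and $q(f,X)$ are in $CC$; and for every morphism $f:Y\to X$ of $CC$ the unique morphism $s_f:Y\to(p_X\circ f)^*X$ with $p\circ s_f=\mathrm{id}_Y$ and $q(p_X\circ f,X)\circ s_f=f$ is in $CC$. Notation: $(T_1,\dots,T_n\rhd_C)$ means $(T_1,\dots,T_n)\in C$; for $\Gamma=(T_1,\dots,T_n)$, $T\in LM([n])$,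 $t\in R([n])$, $(\Gamma\vdash_{\widetilde C}t:T)$ means $(T_1,\dots,T_n,T,t)\in\widetilde C$. Commas denote concatenation of sequences; $\Delta$ may be empty. *)

theory Defs
  imports Main
begin

text \<open>
  A monad R on Sets together with a left R-module LM, restricted to the finite
  ordinals [m] = {1..m} (the only sets on which CC(R,LM) evaluates R and LM).
  Rc m is R([m]), Lc m is LM([m]), eta m i is eta_[m](i), bnd m k f is bind(f)
  for f : [m] -> R([k]) and rho m k f is rho(f) : LM([m]) -> LM([k]).
\<close>

record ('r, 'l) monmod =
  Rc  :: "nat \<Rightarrow> 'r set"
  eta :: "nat \<Rightarrow> nat \<Rightarrow> 'r"
  bnd :: "nat \<Rightarrow> nat \<Rightarrow> (nat \<Rightarrow> 'r) \<Rightarrow> 'r \<Rightarrow> 'r"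
  Lc  :: "nat \<Rightarrow> 'l set"
  rho :: "nat \<Rightarrow> nat \<Rightarrow> (nat \<Rightarrow> 'r) \<Rightarrow> 'l \<Rightarrow> 'l"

definition kl_map :: "('r, 'l) monmod \<Rightarrow> nat \<Rightarrow> nat \<Rightarrow> (nat \<Rightarrow> 'r) \<Rightarrow> bool" where
  "kl_map M m k f \<longleftrightarrow> (\<forall>i\<in>{1..m}. f i \<in> Rc M k)"

definition fin_monad :: "('r, 'l) monmod \<Rightarrow> bool" where
  "fin_monad M \<longleftrightarrow>
     (\<forall>m. \<forall>i\<in>{1..m}. eta M m i \<in> Rc M m) \<and>
     (\<forall>m k f r. kl_map M m k f \<and> r \<in> Rc M m \<longrightarrow> bnd M m k f r \<in> Rc M k) \<and>
     (\<forall>m k f g r. kl_map M m k f \<and> kl_map M m k g \<and> (\<forall>i\<in>{1..m}. f i = g i) \<and> r \<in> Rc M m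
        \<longrightarrow> bnd M m k f r = bnd M m k g r) \<and>
     (\<forall>m r. r \<in> Rc M m \<longrightarrow> bnd M m m (eta M m) r = r) \<and>
     (\<forall>m k f i. kl_map M m k f \<and> i \<in> {1..m} \<longrightarrow> bnd M m k f (eta M m i) = f i) \<and>
     (\<forall>m k l f g r. kl_map M m k f \<and> kl_map M k l g \<and> r \<in> Rc M m \<longrightarrow>
        bnd M m l (\<lambda>i. bnd M k l g (f i)) r = bnd M k l g (bnd M m k f r))"

definition fin_module :: "('r, 'l) monmod \<Rightarrow> bool" where
  "fin_module M \<longleftrightarrow>
     (\<forall>m k f E. kl_map M m k f \<and> E \<in> Lc M m \<longrightarrow> rho M m k f E \<in> Lc M k) \<and>
     (\<forall>m k f g E. kl_map M m k f \<and> kl_map M m k g \<and> (\<forall>i\<in>{1..m}. f i = g i) \<and> E \<in> Lc M m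
        \<longrightarrow> rho M m k f E = rho M m k g E) \<and>
     (\<forall>m E. E \<in> Lc M m \<longrightarrow> rho M m m (eta M m) E = E) \<and>
     (\<forall>m k l f g E. kl_map M m k f \<and> kl_map M k l g \<and> E \<in> Lc M m \<longrightarrow>
        rho M k l g (rho M m k f E) = rho M m l (\<lambda>i. bnd M k l g (f i)) E)"

text \<open>Objects: lists [T_1,...,T_n] with T_i in LM([i-1]).
  Morphisms: triples (source, target, [f_1,...,f_n]).\<close>

definition cc_ob :: "('r, 'l) monmod \<Rightarrow> 'l list \<Rightarrow> bool" where
  "cc_ob M G \<longleftrightarrow> (\<forall>i<length G. G ! i \<in> Lc M i)"

definition cc_hom :: "('r, 'l) monmod \<Rightarrow> 'l list \<Rightarrow> 'l list \<Rightarrow> 'r list \<Rightarrow> bool" where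
  "cc_hom M G D f \<longleftrightarrow> cc_ob M G \<and> cc_ob M D \<and> length f = length D \<and>
     (\<forall>j<length f. f ! j \<in> Rc M (length G))"

definition tf :: "'r list \<Rightarrow> nat \<Rightarrow> 'r" where
  "tf f = (\<lambda>i. f ! (i - 1))"

text \<open>Composite of f (source of length m) followed by g: (g_j(f_1/1,...,f_n/n))_j.\<close>
definition cc_comp :: "('r, 'l) monmod \<Rightarrow> nat \<Rightarrow> 'r list \<Rightarrow> 'r list \<Rightarrow> 'r list" where
  "cc_comp M m f g = map (bnd M (length f) m (tf f)) g"

definition cc_id :: "('r, 'l) monmod \<Rightarrow> 'l list \<Rightarrow> 'r list" where
  "cc_id M G = map (eta M (length G)) [1..<Suc (length G)]"

definition cc_pl :: "('r, 'l) monmod \<Rightarrow> 'l list \<Rightarrow> 'r list" where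
  "cc_pl M X = map (eta M (length X)) [1..<length X]"

definition cc_p :: "('r, 'l) monmod \<Rightarrow> 'l list \<Rightarrow> 'l list \<times> 'l list \<times> 'r list" where
  "cc_p M X = (X, butlast X, cc_pl M X)"

definition incl :: "('r, 'l) monmod \<Rightarrow> nat \<Rightarrow> nat \<Rightarrow> 'r \<Rightarrow> 'r" where
  "incl M m k r = bnd M m k (eta M k) r"

definition cc_pb :: "('r, 'l) monmod \<Rightarrow> 'r list \<Rightarrow> 'l list \<Rightarrow> 'l list \<Rightarrow> 'l list" where
  "cc_pb M f Y X = Y @ [rho M (length X - 1) (length Y) (tf f) (last X)]"

definition cc_ql :: "('r, 'l) monmod \<Rightarrow> 'r list \<Rightarrow> 'l list \<Rightarrow> 'r list" where
  "cc_ql M f Y = map (incl M (length Y) (Suc (length Y))) f @ [eta M (Suc (length Y)) (Suc (length Y))]"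

definition cc_q :: "('r, 'l) monmod \<Rightarrow> 'l list \<Rightarrow> 'r list \<Rightarrow> 'l list \<Rightarrow> 'l list \<times> 'l list \<times> 'r list" where
  "cc_q M Y f X = (cc_pb M f Y X, X, cc_ql M f Y)"

definition cc_pf :: "('r, 'l) monmod \<Rightarrow> 'l list \<Rightarrow> 'l list \<Rightarrow> 'r list \<Rightarrow> 'r list" where
  "cc_pf M Y X f = cc_comp M (length Y) f (cc_pl M X)"

definition cc_sf :: "('r, 'l) monmod \<Rightarrow> 'l list \<Rightarrow> 'l list \<Rightarrow> 'r list \<Rightarrow> 'r list" where
  "cc_sf M Y X f = (THE s. cc_hom M Y (cc_pb M (cc_pf M Y X f) Y X) s \<and>
      cc_comp M (length Y) s (cc_pl M (cc_pb M (cc_pf M Y X f) Y X)) = cc_id M Y \<and>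
      cc_comp M (length Y) s (cc_ql M (cc_pf M Y X f) Y) = f)"

definition cc_subsystem ::
  "('r, 'l) monmod \<Rightarrow> 'l list set \<Rightarrow> ('l list \<times> 'l list \<times> 'r list) set \<Rightarrow> bool" where
  "cc_subsystem M Ob Mor \<longleftrightarrow>
     (\<forall>(G, D, f)\<in>Mor. cc_hom M G D f \<and> G \<in> Ob \<and> D \<in> Ob) \<and>
     (\<forall>G\<in>Ob. cc_ob M G \<and> (G, G, cc_id M G) \<in> Mor) \<and>
     (\<forall>G D T f g. (G, D, f) \<in> Mor \<and> (D, T, g) \<in> Mor \<longrightarrow> (G, T, cc_comp M (length G) f g) \<in> Mor) \<and>
     [] \<in> Ob \<and>
     (\<forall>X\<in>Ob. X \<noteq> [] \<longrightarrow> butlast X \<in> Ob \<and> cc_p M X \<in> Mor) \<and>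
     (\<forall>X\<in>Ob. X \<noteq> [] \<longrightarrow> (\<forall>Y f. (Y, butlast X, f) \<in> Mor \<longrightarrow>
         cc_pb M f Y X \<in> Ob \<and> cc_q M Y f X \<in> Mor)) \<and>
     (\<forall>Y X f. (Y, X, f) \<in> Mor \<and> X \<noteq> [] \<longrightarrow>
         (Y, cc_pb M (cc_pf M Y X f) Y X, cc_sf M Y X f) \<in> Mor)"

text \<open>Ob~ of a subcategory: sections s : ft X -> X (l X > 0, p_X o s = id),
  with (1,...,n,t) identified with (T_1,...,T_n,T,t), i.e. the pair (X, t).\<close>
definition tilde_ob :: "('r, 'l) monmod \<Rightarrow> ('l list \<times> 'l list \<times> 'r list) set \<Rightarrow> ('l list \<times> 'r) set" where
  "tilde_ob M Mor = {(X, last s) | X s. X \<noteq> [] \<and> (butlast X, X, s) \<in> Mor \<and>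
      cc_comp M (length X - 1) s (cc_pl M X) = cc_id M (butlast X)}"

definition wk_map :: "('r, 'l) monmod \<Rightarrow> nat \<Rightarrow> nat \<Rightarrow> nat \<Rightarrow> 'r" where
  "wk_map M n m = (\<lambda>i. eta M (Suc m) (if i \<le> n then i else Suc i))"

definition wk_L :: "('r, 'l) monmod \<Rightarrow> nat \<Rightarrow> nat \<Rightarrow> 'l \<Rightarrow> 'l" where
  "wk_L M n m E = rho M m (Suc m) (wk_map M n m) E"

definition wk_R :: "('r, 'l) monmod \<Rightarrow> nat \<Rightarrow> nat \<Rightarrow> 'r \<Rightarrow> 'r" where
  "wk_R M n m E = bnd M m (Suc m) (wk_map M n m) E"

text \<open>t_{n+1} applied componentwise to Delta = (D_1,...,D_k) with D_j in LM([n+j-1]).\<close>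
definition wk_seq :: "('r, 'l) monmod \<Rightarrow> nat \<Rightarrow> 'l list \<Rightarrow> 'l list" where
  "wk_seq M n D = map (\<lambda>j. wk_L M n (n + j) (D ! j)) [0..<length D]"

definition sb_map :: "('r, 'l) monmod \<Rightarrow> nat \<Rightarrow> 'r \<Rightarrow> nat \<Rightarrow> nat \<Rightarrow> 'r" where
  "sb_map M n s m = (\<lambda>i. if i \<le> n then eta M (m - 1) i
                         else if i = Suc n then incl M n (m - 1) s
                         else eta M (m - 1) (i - 1))"

definition sb_L :: "('r, 'l) monmod \<Rightarrow> nat \<Rightarrow> 'r \<Rightarrow> nat \<Rightarrow> 'l \<Rightarrow> 'l" where
  "sb_L M n s m E = rho M m (m - 1) (sb_map M n s m) E"

definition sb_R :: "('r, 'l) monmod \<Rightarrow> nat \<Rightarrow> 'r \<Rightarrow> nat \<Rightarrow> 'r \<Rightarrow> 'r" where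
  "sb_R M n s m E = bnd M m (m - 1) (sb_map M n s m) E"

text \<open>Componentwise on Delta = (D_1,...,D_k) with D_j in LM([n+1+j-1]).\<close>
definition sb_seq :: "('r, 'l) monmod \<Rightarrow> nat \<Rightarrow> 'r \<Rightarrow> 'l list \<Rightarrow> 'l list" where
  "sb_seq M n s D = map (\<lambda>j. sb_L M n s (Suc n + j) (D ! j)) [0..<length D]"

end

theory Submission
  imports Defs
begin

locale mm = fixes M :: "('r,'l) monmod"
  assumes mon: "fin_monad M" and modl: "fin_module M"
begin

lemma eta_in: "i \<in> {1..m} \<Longrightarrow> eta M m i \<in> Rc M m"
  using mon unfolding fin_monad_def by (elim conjE) simp
lemma eta_in': "1 \<le> i \<Longrightarrow> i \<le> m \<Longrightarrow> eta M m i \<in> Rc M m"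
  using eta_in by simp
lemma kl_eta: "m \<le> k \<Longrightarrow> kl_map M m k (eta M k)"
  unfolding kl_map_def using eta_in by auto
lemma bnd_in: "kl_map M m k f \<Longrightarrow> r \<in> Rc M m \<Longrightarrow> bnd M m k f r \<in> Rc M k"
  using mon unfolding fin_monad_def by (elim conjE) simp
lemma bnd_cong: "kl_map M m k f \<Longrightarrow> kl_map M m k g \<Longrightarrow> (\<And>i. i\<in>{1..m} \<Longrightarrow> f i = g i) \<Longrightarrow> r \<in> Rc M m
   \<Longrightarrow> bnd M m k f r = bnd M m k g r"
  using mon unfolding fin_monad_def by (elim conjE) simp
lemma bnd_eta: "r \<in> Rc M m \<Longrightarrow> bnd M m m (eta M m) r = r"
  using mon unfolding fin_monad_def by (elim conjE) simp
lemma bnd_eta_left: "kl_map M m k f \<Longrightarrow> i \<in> {1..m} \<Longrightarrow> bnd M m k f (eta M m i) = f i"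
  using mon unfolding fin_monad_def by (elim conjE) simp
lemma bnd_assoc: "kl_map M m k f \<Longrightarrow> kl_map M k l g \<Longrightarrow> r \<in> Rc M m \<Longrightarrow>
        bnd M m l (\<lambda>i. bnd M k l g (f i)) r = bnd M k l g (bnd M m k f r)"
  using mon unfolding fin_monad_def by (elim conjE) simp
lemma rho_in: "kl_map M m k f \<Longrightarrow> E \<in> Lc M m \<Longrightarrow> rho M m k f E \<in> Lc M k"
  using modl unfolding fin_module_def by (elim conjE) simp
lemma rho_cong: "kl_map M m k f \<Longrightarrow> kl_map M m k g \<Longrightarrow> (\<And>i. i\<in>{1..m} \<Longrightarrow> f i = g i) \<Longrightarrow> E \<in> Lc M m
   \<Longrightarrow> rho M m k f E = rho M m k g E"
  using modl unfolding fin_module_def by (elim conjE) simp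
lemma rho_eta: "E \<in> Lc M m \<Longrightarrow> rho M m m (eta M m) E = E"
  using modl unfolding fin_module_def by (elim conjE) simp
lemma rho_assoc: "kl_map M m k f \<Longrightarrow> kl_map M k l g \<Longrightarrow> E \<in> Lc M m \<Longrightarrow>
        rho M k l g (rho M m k f E) = rho M m l (\<lambda>i. bnd M k l g (f i)) E"
  using modl unfolding fin_module_def by (elim conjE) simp

lemma kl_mapI: "(\<And>i. 1 \<le> i \<Longrightarrow> i \<le> m \<Longrightarrow> f i \<in> Rc M k) \<Longrightarrow> kl_map M m k f"
  unfolding kl_map_def by auto
lemma kl_mapD: "kl_map M m k f \<Longrightarrow> 1 \<le> i \<Longrightarrow> i \<le> m \<Longrightarrow> f i \<in> Rc M k"
  unfolding kl_map_def by auto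

lemma bnd_id': "(\<And>i. 1 \<le> i \<Longrightarrow> i \<le> m \<Longrightarrow> f i = eta M m i) \<Longrightarrow> r \<in> Rc M m \<Longrightarrow> bnd M m m f r = r"
  by (metis atLeastAtMost_iff bnd_cong bnd_eta eta_in kl_mapI)
lemma rho_id': "(\<And>i. 1 \<le> i \<Longrightarrow> i \<le> m \<Longrightarrow> f i = eta M m i) \<Longrightarrow> E \<in> Lc M m \<Longrightarrow> rho M m m f E = E"
  by (metis atLeastAtMost_iff rho_cong rho_eta eta_in kl_mapI)

lemma bnd_comp': "kl_map M m k f \<Longrightarrow> kl_map M k l g \<Longrightarrow> r \<in> Rc M m \<Longrightarrow>
   (\<And>i. 1 \<le> i \<Longrightarrow> i \<le> m \<Longrightarrow> bnd M k l g (f i) = h i) \<Longrightarrow>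
   bnd M k l g (bnd M m k f r) = bnd M m l h r"
proof -
  assume a: "kl_map M m k f" "kl_map M k l g" "r \<in> Rc M m"
    and h: "\<And>i. 1 \<le> i \<Longrightarrow> i \<le> m \<Longrightarrow> bnd M k l g (f i) = h i"
  have k1: "kl_map M m l (\<lambda>i. bnd M k l g (f i))"
    using a by (auto intro!: kl_mapI bnd_in dest: kl_mapD)
  have k2: "kl_map M m l h" using k1 h unfolding kl_map_def by auto
  show ?thesis using bnd_assoc[OF a] bnd_cong[OF k1 k2, of r] h a(3) by auto
qed

lemma rho_comp': "kl_map M m k f \<Longrightarrow> kl_map M k l g \<Longrightarrow> E \<in> Lc M m \<Longrightarrow>
   (\<And>i. 1 \<le> i \<Longrightarrow> i \<le> m \<Longrightarrow> bnd M k l g (f i) = h i) \<Longrightarrow>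
   rho M k l g (rho M m k f E) = rho M m l h E"
proof -
  assume a: "kl_map M m k f" "kl_map M k l g" "E \<in> Lc M m"
    and h: "\<And>i. 1 \<le> i \<Longrightarrow> i \<le> m \<Longrightarrow> bnd M k l g (f i) = h i"
  have k1: "kl_map M m l (\<lambda>i. bnd M k l g (f i))"
    using a by (auto intro!: kl_mapI bnd_in dest: kl_mapD)
  have k2: "kl_map M m l h" using k1 h unfolding kl_map_def by auto
  show ?thesis using rho_assoc[OF a] rho_cong[OF k1 k2, of E] h a(3) by auto
qed

lemma bnd_eta_left': "kl_map M m k f \<Longrightarrow> 1 \<le> i \<Longrightarrow> i \<le> m \<Longrightarrow> bnd M m k f (eta M m i) = f i"
  using bnd_eta_left by auto

lemma incl_in: "m \<le> k \<Longrightarrow> r \<in> Rc M m \<Longrightarrow> incl M m k r \<in> Rc M k"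
  unfolding incl_def by (rule bnd_in[OF kl_eta])
lemma incl_same: "r \<in> Rc M m \<Longrightarrow> incl M m m r = r"
  unfolding incl_def by (rule bnd_eta)
lemma incl_eta: "m \<le> k \<Longrightarrow> 1 \<le> i \<Longrightarrow> i \<le> m \<Longrightarrow> incl M m k (eta M m i) = eta M k i"
  unfolding incl_def by (rule bnd_eta_left'[OF kl_eta])
lemma bnd_incl: "m \<le> k \<Longrightarrow> kl_map M k l g \<Longrightarrow> r \<in> Rc M m \<Longrightarrow> bnd M k l g (incl M m k r) = bnd M m l g r"
  unfolding incl_def
  apply (rule bnd_comp'[OF kl_eta], assumption+)
  by (simp add: bnd_eta_left')
lemma incl_incl: "m \<le> k \<Longrightarrow> k \<le> l \<Longrightarrow> r \<in> Rc M m \<Longrightarrow> incl M k l (incl M m k r) = incl M m l r"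
  by (simp add: incl_def bnd_incl[unfolded incl_def] kl_eta)

end


definition ext :: "('r,'l) monmod \<Rightarrow> (nat \<Rightarrow> 'r) \<Rightarrow> nat \<Rightarrow> nat \<Rightarrow> nat \<Rightarrow> nat \<Rightarrow> 'r" where
  "ext M \<sigma> a b k i = (if i \<le> a then incl M b (b+k) (\<sigma> i) else eta M (b+k) (i - a + b))"

definition subs :: "('r,'l) monmod \<Rightarrow> (nat \<Rightarrow> 'r) \<Rightarrow> nat \<Rightarrow> nat \<Rightarrow> 'l list \<Rightarrow> 'l list" where
  "subs M \<sigma> a b D = map (\<lambda>j. rho M (a+j) (b+j) (ext M \<sigma> a b j) (D!j)) [0..<length D]"

lemma length_subs[simp]: "length (subs M \<sigma> a b D) = length D"
  by (simp add: subs_def)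
lemma nth_subs[simp]: "j < length D \<Longrightarrow> subs M \<sigma> a b D ! j = rho M (a+j) (b+j) (ext M \<sigma> a b j) (D!j)"
  by (simp add: subs_def)
lemma length_wk_seq[simp]: "length (wk_seq M n D) = length D"
  by (simp add: wk_seq_def)
lemma nth_wk_seq[simp]: "j < length D \<Longrightarrow> wk_seq M n D ! j = wk_L M n (n+j) (D!j)"
  by (simp add: wk_seq_def)
lemma length_sb_seq[simp]: "length (sb_seq M n s D) = length D"
  by (simp add: sb_seq_def)
lemma nth_sb_seq[simp]: "j < length D \<Longrightarrow> sb_seq M n s D ! j = sb_L M n s (Suc n + j) (D!j)"
  by (simp add: sb_seq_def)

context mm begin

lemma kl_ext: "kl_map M a b \<sigma> \<Longrightarrow> kl_map M (a+k) (b+k) (ext M \<sigma> a b k)"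
  by (rule kl_mapI) (auto simp: ext_def intro!: incl_in eta_in' dest: kl_mapD)

lemma kl_wk: "kl_map M m (Suc m) (wk_map M n m)"
  by (rule kl_mapI) (auto simp: wk_map_def intro!: eta_in')

lemma kl_sb: "Suc n \<le> m \<Longrightarrow> s \<in> Rc M n \<Longrightarrow> kl_map M m (m - 1) (sb_map M n s m)"
  by (rule kl_mapI) (auto simp: sb_map_def intro!: eta_in' incl_in)

lemma bnd_incl_cong: "m \<le> k \<Longrightarrow> kl_map M m k f \<Longrightarrow> (\<And>i. 1 \<le> i \<Longrightarrow> i \<le> m \<Longrightarrow> f i = eta M k i) \<Longrightarrow> r \<in> Rc M m
   \<Longrightarrow> bnd M m k f r = incl M m k r"
  unfolding incl_def by (rule bnd_cong) (auto simp: kl_eta)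

lemma wk_ext0: "1 \<le> l \<Longrightarrow> l \<le> j \<Longrightarrow>
  bnd M (m+j) (Suc (m+j)) (wk_map M m (m+j)) (ext M \<sigma> 0 m j l) = ext M \<sigma> 0 (Suc m) j l"
  using bnd_eta_left'[OF kl_wk, of "l+m" "m+j" m] by (simp add: ext_def wk_map_def)

lemma sb_ext: assumes "kl_map M (Suc i) m \<sigma>" "1 \<le> l" "l \<le> i + Suc j"
  shows "bnd M (Suc (m+j)) (m+j) (sb_map M m (\<sigma> (Suc i)) (Suc (m+j))) (ext M \<sigma> i m (Suc j) l)
       = ext M \<sigma> (Suc i) m j l"
proof -
  have s: "\<sigma> (Suc i) \<in> Rc M m" using assms(1) kl_mapD by auto
  have k: "kl_map M (Suc (m+j)) (m+j) (sb_map M m (\<sigma> (Suc i)) (Suc (m+j)))"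
    using kl_sb[OF _ s, of "Suc (m+j)"] by simp
  consider "l \<le> i" | "l = Suc i" | "l > Suc i" by linarith
  then show ?thesis
  proof cases
    case 1
    have sl: "\<sigma> l \<in> Rc M m" using assms 1 kl_mapD by auto
    have "bnd M (Suc (m+j)) (m+j) (sb_map M m (\<sigma> (Suc i)) (Suc (m+j))) (incl M m (m + Suc j) (\<sigma> l))
       = bnd M m (m+j) (sb_map M m (\<sigma> (Suc i)) (Suc (m+j))) (\<sigma> l)"
      using bnd_incl[of m "Suc (m+j)", OF _ k sl] by simp
    also have "\<dots> = incl M m (m+j) (\<sigma> l)"
      apply (rule bnd_incl_cong[OF _ _ _ sl])
      using k by (auto simp: sb_map_def kl_map_def eta_in')
    finally show ?thesis using 1 by (simp add: ext_def)
  next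
    case 2
    then show ?thesis using k by (simp add: ext_def bnd_eta_left' sb_map_def)
  next
    case 3
    then have "l + m - i \<noteq> Suc m" "\<not> l + m - i \<le> m" by auto
    then show ?thesis using k assms 3 by (simp add: ext_def bnd_eta_left' sb_map_def)
  qed
qed

end


lemma length_cc_id[simp]: "length (cc_id M G) = length G" by (simp add: cc_id_def del: upt_Suc)
lemma nth_cc_id[simp]: "i < length G \<Longrightarrow> cc_id M G ! i = eta M (length G) (Suc i)"
  by (simp add: cc_id_def del: upt_Suc)
lemma length_cc_pl[simp]: "length (cc_pl M X) = length X - 1" by (simp add: cc_pl_def)
lemma nth_cc_pl[simp]: "i < length X - 1 \<Longrightarrow> cc_pl M X ! i = eta M (length X) (Suc i)"
  by (simp add: cc_pl_def)
lemma length_cc_comp[simp]: "length (cc_comp M m f g) = length g" by (simp add: cc_comp_def)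
lemma nth_cc_comp[simp]: "i < length g \<Longrightarrow> cc_comp M m f g ! i = bnd M (length f) m (tf f) (g!i)"
  by (simp add: cc_comp_def)
lemma length_cc_ql[simp]: "length (cc_ql M f Y) = Suc (length f)" by (simp add: cc_ql_def)
lemma length_cc_pb[simp]: "length (cc_pb M f Y X) = Suc (length Y)" by (simp add: cc_pb_def)
lemma length_cc_pf[simp]: "length (cc_pf M Y X f) = length X - 1" by (simp add: cc_pf_def)
lemma tf_nth: "tf f (Suc i) = f ! i" by (simp add: tf_def)
lemma tf_nth': "1 \<le> l \<Longrightarrow> tf f l = f ! (l - 1)" by (simp add: tf_def)

lemma cc_obD: "cc_ob M G \<Longrightarrow> i < length G \<Longrightarrow> G ! i \<in> Lc M i" by (simp add: cc_ob_def)
lemma cc_ob_app: "cc_ob M (A @ B) \<longleftrightarrow> cc_ob M A \<and> (\<forall>j<length B. B ! j \<in> Lc M (length A + j))"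
proof
  assume h: "cc_ob M (A @ B)"
  show "cc_ob M A \<and> (\<forall>j<length B. B ! j \<in> Lc M (length A + j))"
  proof (intro conjI allI impI)
    show "cc_ob M A" unfolding cc_ob_def
    proof (intro allI impI)
      fix i assume "i < length A"
      then show "A ! i \<in> Lc M i" using h[unfolded cc_ob_def, rule_format, of i] by (simp add: nth_append)
    qed
    fix j assume "j < length B"
    then show "B ! j \<in> Lc M (length A + j)"
      using h[unfolded cc_ob_def, rule_format, of "length A + j"] by (simp add: nth_append)
  qed
next
  assume h: "cc_ob M A \<and> (\<forall>j<length B. B ! j \<in> Lc M (length A + j))"
  show "cc_ob M (A @ B)" unfolding cc_ob_def
  proof (intro allI impI)
    fix i assume i: "i < length (A @ B)"
    show "(A @ B) ! i \<in> Lc M i"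
    proof (cases "i < length A")
      case True then show ?thesis using h by (simp add: nth_append cc_ob_def)
    next
      case False
      then have "i - length A < length B" "length A + (i - length A) = i" using i by auto
      then show ?thesis using h False by (metis nth_append)
    qed
  qed
qed
lemma cc_ob_snoc: "cc_ob M (A @ [E]) \<longleftrightarrow> cc_ob M A \<and> E \<in> Lc M (length A)"
  by (simp add: cc_ob_app)

context mm begin

lemma kl_tf: "(\<And>i. i < n \<Longrightarrow> f ! i \<in> Rc M k) \<Longrightarrow> kl_map M n k (tf f)"
  by (rule kl_mapI) (simp add: tf_def)
lemma kl_tf_mono: "kl_map M n k (tf f) \<Longrightarrow> i \<le> n \<Longrightarrow> kl_map M i k (tf f)"
  unfolding kl_map_def by auto
lemma kl_mono: "kl_map M n k f \<Longrightarrow> i \<le> n \<Longrightarrow> kl_map M i k f"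
  unfolding kl_map_def by auto

lemma cc_hom_kl: "cc_hom M Y X f \<Longrightarrow> kl_map M (length X) (length Y) (tf f)"
  unfolding cc_hom_def by (auto intro!: kl_tf)

lemma nth_cc_pf: assumes "cc_hom M Y X f" "i < length X - 1"
  shows "cc_pf M Y X f ! i = f ! i"
proof -
  have k: "kl_map M (length X) (length Y) (tf f)" using cc_hom_kl assms by auto
  have "length f = length X" using assms unfolding cc_hom_def by auto
  then show ?thesis using assms(2) bnd_eta_left'[OF k, of "Suc i"]
    by (simp add: cc_pf_def tf_nth)
qed

lemma sf_eq: assumes h: "cc_hom M Y X f" and ne: "X \<noteq> []"
  shows "cc_sf M Y X f = cc_id M Y @ [last f]"
proof -
  define m where "m = length Y"
  have lY: "length Y = m" by (simp add: m_def)
  define pf where "pf = cc_pf M Y X f"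
  define Z where "Z = cc_pb M pf Y X"
  define s0 where "s0 = cc_id M Y @ [last f]"
  have lf: "length f = length X" and obY: "cc_ob M Y" and obX: "cc_ob M X"
    and fr: "\<And>j. j < length f \<Longrightarrow> f ! j \<in> Rc M m"
    using h unfolding cc_hom_def m_def by auto
  have k: "kl_map M (length X) m (tf f)" using cc_hom_kl h m_def by auto
  have lpf: "length pf = length X - 1" by (simp add: pf_def)
  have pfi: "\<And>i. i < length X - 1 \<Longrightarrow> pf ! i = f ! i" using nth_cc_pf[OF h] pf_def by auto
  have "f \<noteq> []" using ne lf by auto
  then have lastf: "last f = f ! (length X - 1)" using lf by (simp add: last_conv_nth)
  have lastX: "last X = X ! (length X - 1)" using ne by (simp add: last_conv_nth)
  have kpf: "kl_map M (length X - 1) m (tf pf)"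
    by (rule kl_tf) (simp add: pfi fr lf)
  have lZ: "length Z = Suc m" by (simp add: Z_def m_def)
  have Zeq: "Z = Y @ [rho M (length X - 1) m (tf pf) (last X)]"
    by (simp add: Z_def cc_pb_def m_def)
  have obZ: "cc_ob M Z"
    unfolding Zeq cc_ob_snoc using obY kpf obX ne
    by (auto simp: m_def lastX intro!: rho_in cc_obD)
  have ls0: "length s0 = Suc m" by (simp add: s0_def m_def)
  have s0i: "\<And>i. i < m \<Longrightarrow> s0 ! i = eta M m (Suc i)" by (simp add: s0_def nth_append m_def)
  have s0m: "s0 ! m = last f" by (simp add: s0_def nth_append m_def)
  have s0r: "\<And>i. i < length s0 \<Longrightarrow> s0 ! i \<in> Rc M m"
  proof -
    fix i assume "i < length s0"
    then consider "i < m" | "i = m" using ls0 by linarith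
    then show "s0 ! i \<in> Rc M m"
    proof cases
      case 1 then show ?thesis using s0i eta_in' by simp
    next
      case 2
      have "length X - 1 < length f" using ne lf by simp
      then show ?thesis using 2 s0m lastf fr by simp
    qed
  qed
  have ks0: "kl_map M (Suc m) m (tf s0)" using s0r ls0 by (intro kl_tf) auto
  have tfs0: "\<And>l. 1 \<le> l \<Longrightarrow> l \<le> m \<Longrightarrow> tf s0 l = eta M m l"
    using s0i by (simp add: tf_def)
  have lql: "length (cc_ql M pf Y) = length X" using lpf ne by simp
  define P where "P s \<longleftrightarrow> cc_hom M Y Z s \<and> cc_comp M m s (cc_pl M Z) = cc_id M Y \<and>
      cc_comp M m s (cc_ql M pf Y) = f" for s
  have P0: "P s0"
    unfolding P_def
  proof (intro conjI)
    have "\<forall>j<length s0. s0 ! j \<in> Rc M (length Y)" using s0r unfolding m_def by blast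
    then show "cc_hom M Y Z s0" unfolding cc_hom_def using obY obZ ls0 lZ by simp
    show "cc_comp M m s0 (cc_pl M Z) = cc_id M Y"
    proof (rule nth_equalityI)
      show "length (cc_comp M m s0 (cc_pl M Z)) = length (cc_id M Y)" using lZ lY by simp
      fix i assume "i < length (cc_comp M m s0 (cc_pl M Z))"
      then have i: "i < m" using lZ by simp
      have "bnd M (Suc m) m (tf s0) (eta M (Suc m) (Suc i)) = tf s0 (Suc i)"
        using bnd_eta_left'[OF ks0, of "Suc i"] i by simp
      then show "cc_comp M m s0 (cc_pl M Z) ! i = cc_id M Y ! i"
        using i lZ lY ls0 s0i by (simp add: tf_nth)
    qed
    show "cc_comp M m s0 (cc_ql M pf Y) = f"
    proof (rule nth_equalityI)
      show "length (cc_comp M m s0 (cc_ql M pf Y)) = length f" using lql lf by simp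
      fix i assume "i < length (cc_comp M m s0 (cc_ql M pf Y))"
      then have i: "i < length X" using lql by simp
      show "cc_comp M m s0 (cc_ql M pf Y) ! i = f ! i"
      proof (cases "i < length X - 1")
        case True
        have "pf ! i \<in> Rc M m" using pfi True fr lf by auto
        then have "bnd M (Suc m) m (tf s0) (incl M m (Suc m) (pf ! i)) = pf ! i"
          using bnd_incl[OF _ ks0] bnd_id'[OF tfs0] by simp
        moreover have "cc_ql M pf Y ! i = incl M m (Suc m) (pf ! i)"
          using True lpf lY by (simp add: cc_ql_def nth_append)
        ultimately show ?thesis using True i ls0 lpf pfi lql by simp
      next
        case False
        then have "i = length X - 1" using i by simp
        moreover have "cc_ql M pf Y ! i = eta M (Suc m) (Suc m)"
          using `i = length X - 1` lpf lY by (simp add: cc_ql_def nth_append)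
        moreover have "bnd M (Suc m) m (tf s0) (eta M (Suc m) (Suc m)) = last f"
          using bnd_eta_left'[OF ks0, of "Suc m"] s0m by (simp add: tf_nth)
        ultimately show ?thesis using ls0 lql lastf i by simp
      qed
    qed
  qed
  have uniq: "s = s0" if "P s" for s
  proof -
    have hs: "cc_hom M Y Z s" and e1: "cc_comp M m s (cc_pl M Z) = cc_id M Y"
      and e2: "cc_comp M m s (cc_ql M pf Y) = f" using that P_def by auto
    have ls: "length s = Suc m" using hs lZ unfolding cc_hom_def by auto
    have ks: "kl_map M (Suc m) m (tf s)" using cc_hom_kl[OF hs] lZ m_def by simp
    show ?thesis
    proof (rule nth_equalityI)
      show "length s = length s0" using ls ls0 by simp
      fix i assume "i < length s"
      then have i: "i < Suc m" using ls by simp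
      show "s ! i = s0 ! i"
      proof (cases "i < m")
        case True
        have "cc_comp M m s (cc_pl M Z) ! i = cc_id M Y ! i" using e1 by simp
        moreover have "bnd M (Suc m) m (tf s) (eta M (Suc m) (Suc i)) = s ! i"
          using bnd_eta_left'[OF ks, of "Suc i"] True by (simp add: tf_nth)
        ultimately show ?thesis using True lZ ls lY s0i by simp
      next
        case False
        then have im: "i = m" using i by simp
        have "cc_comp M m s (cc_ql M pf Y) ! (length X - 1) = f ! (length X - 1)" using e2 by simp
        moreover have "cc_ql M pf Y ! (length X - 1) = eta M (Suc m) (Suc m)"
          using lpf lY by (simp add: cc_ql_def nth_append)
        moreover have "bnd M (Suc m) m (tf s) (eta M (Suc m) (Suc m)) = s ! m"
          using bnd_eta_left'[OF ks, of "Suc m"] by (simp add: tf_nth)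
        ultimately show ?thesis using im ls lql ne s0m lastf by simp
      qed
    qed
  qed
  have "cc_sf M Y X f = (THE s. P s)"
    unfolding cc_sf_def P_def Z_def pf_def m_def by simp
  also have "\<dots> = s0" using P0 uniq by (rule the_equality)
  finally show ?thesis by (simp add: s0_def)
qed

end


lemma wk_seq_Nil[simp]: "wk_seq M n [] = []" by (simp add: wk_seq_def)
lemma sb_seq_Nil[simp]: "sb_seq M n s [] = []" by (simp add: sb_seq_def)
lemma subs_Nil[simp]: "subs M \<sigma> a b [] = []" by (simp add: subs_def)

locale bwd = mm M for M :: "('r,'l) monmod" +
  fixes C :: "'l list set" and Ct :: "('l list \<times> 'r) set"
  assumes obC: "\<And>G. G \<in> C \<Longrightarrow> cc_ob M G"
  and ctw: "\<And>X r. (X, r) \<in> Ct \<Longrightarrow> X \<noteq> [] \<and> cc_ob M X \<and> r \<in> Rc M (length X - 1)"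
  and c1: "[] \<in> C"
  and c2: "\<And>G T. G @ [T] \<in> C \<Longrightarrow> G \<in> C"
  and c3: "\<And>G R r. (G @ [R], r) \<in> Ct \<Longrightarrow> G @ [R] \<in> C"
  and c4: "\<And>G T D R r. G @ [T] \<in> C \<Longrightarrow> (G @ D @ [R], r) \<in> Ct \<Longrightarrow>
        (G @ [T] @ wk_seq M (length G) D @ [wk_L M (length G) (length G + length D) R],
         wk_R M (length G) (length G + length D) r) \<in> Ct"
  and c5: "\<And>G S s D R r. (G @ [S], s) \<in> Ct \<Longrightarrow> (G @ [S] @ D @ [R], r) \<in> Ct \<Longrightarrow>
        (G @ sb_seq M (length G) s D @ [sb_L M (length G) s (Suc (length G) + length D) R],
         sb_R M (length G) s (Suc (length G) + length D) r) \<in> Ct"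
  and c6: "\<And>G T. G @ [T] \<in> C \<Longrightarrow>
        (G @ [T, wk_L M (length G) (length G) T], eta M (Suc (length G)) (Suc (length G))) \<in> Ct"
begin

lemma ctR: "(G @ [R], r) \<in> Ct \<Longrightarrow> r \<in> Rc M (length G)"
  using ctw[of "G @ [R]" r] by simp
lemma ctob: "(X, r) \<in> Ct \<Longrightarrow> cc_ob M X"
  using ctw by blast

lemma take_C: "G \<in> C \<Longrightarrow> take k G \<in> C"
proof (induction "length G - k" arbitrary: G)
  case 0 then show ?case by simp
next
  case (Suc x)
  then have ne: "G \<noteq> []" by auto
  then have "G = butlast G @ [last G]" by simp
  then have bC: "butlast G \<in> C" using c2 Suc.prems by metis
  have "x = length (butlast G) - k" using Suc.hyps(2) by simp
  then have "take k (butlast G) \<in> C" using Suc.hyps(1) bC by blast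
  moreover have "take k (butlast G) = take k G" using Suc.hyps(2)
    by (simp add: take_butlast)
  ultimately show ?case by simp
qed

lemma wkL_eta: "E \<in> Lc M i \<Longrightarrow> i \<le> k \<Longrightarrow>
  wk_L M k k (rho M i k (eta M k) E) = rho M i (Suc k) (eta M (Suc k)) E"
  unfolding wk_L_def
  apply (rule rho_comp'[OF kl_eta kl_wk])
    apply simp+
  using bnd_eta_left'[OF kl_wk] by (simp add: wk_map_def)

lemma var_lemma: assumes G: "G \<in> C" and i: "i < length G"
  shows "(G @ [rho M i (length G) (eta M (length G)) (G ! i)], eta M (length G) (Suc i)) \<in> Ct"
proof -
  have Ei: "G ! i \<in> Lc M i" using obC[OF G] i cc_obD by blast
  have "\<forall>k. Suc i \<le> k \<longrightarrow> k \<le> length G \<longrightarrow>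
     (take k G @ [rho M i k (eta M k) (G ! i)], eta M k (Suc i)) \<in> Ct"
  proof (intro allI impI)
    fix k assume "Suc i \<le> k" "k \<le> length G"
    then show "(take k G @ [rho M i k (eta M k) (G ! i)], eta M k (Suc i)) \<in> Ct"
    proof (induction k)
      case 0 then show ?case by simp
    next
      case (Suc k)
      show ?case
      proof (cases "k = i")
        case True
        have tk: "take (Suc i) G = take i G @ [G ! i]" using i by (simp add: take_Suc_conv_app_nth)
        have "take (Suc i) G \<in> C" using take_C[OF G] .
        then have "(take i G @ [G ! i, wk_L M i i (G ! i)], eta M (Suc i) (Suc i)) \<in> Ct"
          using c6[of "take i G" "G ! i"] tk i by simp
        moreover have "wk_L M i i (G ! i) = rho M i (Suc i) (eta M (Suc i)) (G ! i)"
          unfolding wk_L_def by (rule rho_cong[OF kl_wk kl_eta _ Ei]) (auto simp: wk_map_def)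
        ultimately show ?thesis using True tk by simp
      next
        case False
        then have ik: "Suc i \<le> k" "k < length G" using Suc.prems by auto
        have IH: "(take k G @ [rho M i k (eta M k) (G ! i)], eta M k (Suc i)) \<in> Ct"
          using Suc.IH ik by simp
        have tk: "take (Suc k) G = take k G @ [G ! k]" using ik by (simp add: take_Suc_conv_app_nth)
        have "take (Suc k) G \<in> C" using take_C[OF G] .
        then have "(take k G @ [G ! k] @ [] @ [wk_L M k k (rho M i k (eta M k) (G ! i))],
                    wk_R M k k (eta M k (Suc i))) \<in> Ct"
          using c4[of "take k G" "G ! k" "[]"] IH tk ik by simp
        moreover have "wk_L M k k (rho M i k (eta M k) (G ! i)) = rho M i (Suc k) (eta M (Suc k)) (G ! i)"
          using wkL_eta[OF Ei] ik by simp
        moreover have "wk_R M k k (eta M k (Suc i)) = eta M (Suc k) (Suc i)"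
          unfolding wk_R_def using bnd_eta_left'[OF kl_wk, of "Suc i" k k] ik by (simp add: wk_map_def)
        ultimately show ?thesis using tk by simp
      qed
    qed
  qed
  then show ?thesis using i by (metis Suc_leI order_refl take_all)
qed

end


lemma cc_ob_snocD: "cc_ob M (A @ [E]) \<Longrightarrow> j < length A \<Longrightarrow> A ! j \<in> Lc M j"
  by (simp add: cc_ob_snoc cc_obD)
lemma cc_ob_snocE: "cc_ob M (A @ [E]) \<Longrightarrow> E \<in> Lc M (length A)"
  by (simp add: cc_ob_snoc)

context mm begin

lemma kl0: "kl_map M 0 m \<sigma>" by (rule kl_mapI) simp

lemma kl_ext0: "kl_map M j (m + j) (ext M \<sigma> 0 m j)"
  using kl_ext[OF kl0[of m \<sigma>], of j] by simp

lemma rho_wk_ext0: "E \<in> Lc M j \<Longrightarrow>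
  wk_L M m (m+j) (rho M j (m+j) (ext M \<sigma> 0 m j) E) = rho M j (Suc (m+j)) (ext M \<sigma> 0 (Suc m) j) E"
  unfolding wk_L_def
  apply (rule rho_comp'[OF kl_ext0 kl_wk])
  using wk_ext0 by auto

lemma bnd_wk_ext0: "r \<in> Rc M j \<Longrightarrow>
  wk_R M m (m+j) (bnd M j (m+j) (ext M \<sigma> 0 m j) r) = bnd M j (Suc (m+j)) (ext M \<sigma> 0 (Suc m) j) r"
  unfolding wk_R_def
  apply (rule bnd_comp'[OF kl_ext0 kl_wk])
  using wk_ext0 by auto

lemma ext00: "1 \<le> l \<Longrightarrow> l \<le> j \<Longrightarrow> ext M \<sigma> 0 0 j l = eta M j l"
  by (simp add: ext_def)
lemma rho_ext00: "E \<in> Lc M j \<Longrightarrow> rho M j j (ext M \<sigma> 0 0 j) E = E"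
  by (rule rho_id') (simp_all add: ext_def)
lemma bnd_ext00: "r \<in> Rc M j \<Longrightarrow> bnd M j j (ext M \<sigma> 0 0 j) r = r"
  by (rule bnd_id') (simp_all add: ext_def)

lemma sb_rho: assumes k: "kl_map M (Suc i) m \<sigma>" and E: "E \<in> Lc M (Suc (i+j))"
  shows "rho M (Suc (m+j)) (m+j) (sb_map M m (\<sigma> (Suc i)) (Suc (m+j)))
           (rho M (Suc (i+j)) (Suc (m+j)) (ext M \<sigma> i m (Suc j)) E)
       = rho M (Suc (i+j)) (m+j) (ext M \<sigma> (Suc i) m j) E"
proof -
  have ki: "kl_map M i m \<sigma>" using kl_mono[OF k] by simp
  have k1: "kl_map M (Suc (i+j)) (Suc (m+j)) (ext M \<sigma> i m (Suc j))" using kl_ext[OF ki, of "Suc j"] by simp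
  have s: "\<sigma> (Suc i) \<in> Rc M m" using k kl_mapD by auto
  have k2: "kl_map M (Suc (m+j)) (m+j) (sb_map M m (\<sigma> (Suc i)) (Suc (m+j)))"
    using kl_sb[OF _ s, of "Suc (m+j)"] by simp
  show ?thesis
    apply (rule rho_comp'[OF k1 k2 E])
    using sb_ext[OF k] by simp
qed

lemma sb_bnd: assumes k: "kl_map M (Suc i) m \<sigma>" and E: "r \<in> Rc M (Suc (i+j))"
  shows "bnd M (Suc (m+j)) (m+j) (sb_map M m (\<sigma> (Suc i)) (Suc (m+j)))
           (bnd M (Suc (i+j)) (Suc (m+j)) (ext M \<sigma> i m (Suc j)) r)
       = bnd M (Suc (i+j)) (m+j) (ext M \<sigma> (Suc i) m j) r"
proof -
  have ki: "kl_map M i m \<sigma>" using kl_mono[OF k] by simp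
  have k1: "kl_map M (Suc (i+j)) (Suc (m+j)) (ext M \<sigma> i m (Suc j))" using kl_ext[OF ki, of "Suc j"] by simp
  have s: "\<sigma> (Suc i) \<in> Rc M m" using k kl_mapD by auto
  have k2: "kl_map M (Suc (m+j)) (m+j) (sb_map M m (\<sigma> (Suc i)) (Suc (m+j)))"
    using kl_sb[OF _ s, of "Suc (m+j)"] by simp
  show ?thesis
    apply (rule bnd_comp'[OF k1 k2 E])
    using sb_ext[OF k] by simp
qed

lemma ext_0_eq: "kl_map M i m \<sigma> \<Longrightarrow> 1 \<le> l \<Longrightarrow> l \<le> i \<Longrightarrow> ext M \<sigma> i m 0 l = \<sigma> l"
  by (simp add: ext_def incl_same kl_mapD)

end

context bwd begin

lemma FW: assumes "Y \<in> C" and "(\<Theta> @ [R], r) \<in> Ct"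
  shows "(Y @ subs M \<sigma> 0 (length Y) \<Theta> @ [rho M (length \<Theta>) (length Y + length \<Theta>) (ext M \<sigma> 0 (length Y) (length \<Theta>)) R],
          bnd M (length \<Theta>) (length Y + length \<Theta>) (ext M \<sigma> 0 (length Y) (length \<Theta>)) r) \<in> Ct"
  using assms(1)
proof (induction Y rule: rev_induct)
  have ob: "cc_ob M (\<Theta> @ [R])" using ctob assms(2) .
  have Th: "\<And>j. j < length \<Theta> \<Longrightarrow> \<Theta> ! j \<in> Lc M j" using cc_ob_snocD[OF ob] .
  have RL: "R \<in> Lc M (length \<Theta>)" using cc_ob_snocE[OF ob] .
  have rR: "r \<in> Rc M (length \<Theta>)" using ctR assms(2) .
  case Nil
  have "subs M \<sigma> 0 0 \<Theta> = \<Theta>"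
    by (rule nth_equalityI) (simp_all add: rho_ext00 Th)
  moreover have "rho M (length \<Theta>) (length \<Theta>) (ext M \<sigma> 0 0 (length \<Theta>)) R = R"
    by (rule rho_ext00[OF RL])
  moreover have "bnd M (length \<Theta>) (length \<Theta>) (ext M \<sigma> 0 0 (length \<Theta>)) r = r"
    by (rule bnd_ext00[OF rR])
  ultimately show ?case using assms(2) by simp
next
  have ob: "cc_ob M (\<Theta> @ [R])" using ctob assms(2) .
  have Th: "\<And>j. j < length \<Theta> \<Longrightarrow> \<Theta> ! j \<in> Lc M j" using cc_ob_snocD[OF ob] .
  have RL: "R \<in> Lc M (length \<Theta>)" using cc_ob_snocE[OF ob] .
  have rR: "r \<in> Rc M (length \<Theta>)" using ctR assms(2) .
  case (snoc T Y0)
  have Y0: "Y0 \<in> C" using c2 snoc.prems .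
  note IH = snoc.IH[OF Y0]
  define m0 where "m0 = length Y0"
  define N where "N = length \<Theta>"
  have "(Y0 @ [T] @ wk_seq M m0 (subs M \<sigma> 0 m0 \<Theta>) @ [wk_L M m0 (m0 + N) (rho M N (m0 + N) (ext M \<sigma> 0 m0 N) R)],
         wk_R M m0 (m0 + N) (bnd M N (m0 + N) (ext M \<sigma> 0 m0 N) r)) \<in> Ct"
    using c4[OF snoc.prems IH] unfolding m0_def N_def by simp
  moreover have "wk_seq M m0 (subs M \<sigma> 0 m0 \<Theta>) = subs M \<sigma> 0 (Suc m0) \<Theta>"
    by (rule nth_equalityI) (simp_all add: rho_wk_ext0 Th)
  moreover have "wk_L M m0 (m0 + N) (rho M N (m0 + N) (ext M \<sigma> 0 m0 N) R) = rho M N (Suc (m0 + N)) (ext M \<sigma> 0 (Suc m0) N) R"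
    using rho_wk_ext0 RL N_def by simp
  moreover have "wk_R M m0 (m0 + N) (bnd M N (m0 + N) (ext M \<sigma> 0 m0 N) r) = bnd M N (Suc (m0 + N)) (ext M \<sigma> 0 (Suc m0) N) r"
    using bnd_wk_ext0 rR N_def by simp
  ultimately show ?case by (simp add: m0_def N_def)
qed

lemma SUB: assumes Y: "Y \<in> C" and m: "length Y = m" and k\<sigma>: "kl_map M n m \<sigma>" and nN: "n \<le> length \<Theta>"
  and H: "\<And>i. i < n \<Longrightarrow> (Y @ [rho M i m \<sigma> (\<Theta> ! i)], \<sigma> (Suc i)) \<in> Ct"
  and J: "(\<Theta> @ [R], r) \<in> Ct"
  shows "(Y @ subs M \<sigma> n m (drop n \<Theta>) @ [rho M (length \<Theta>) (m + (length \<Theta> - n)) (ext M \<sigma> n m (length \<Theta> - n)) R],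
          bnd M (length \<Theta>) (m + (length \<Theta> - n)) (ext M \<sigma> n m (length \<Theta> - n)) r) \<in> Ct"
proof -
  have ob: "cc_ob M (\<Theta> @ [R])" using ctob J .
  have Th: "\<And>j. j < length \<Theta> \<Longrightarrow> \<Theta> ! j \<in> Lc M j" using cc_ob_snocD[OF ob] .
  have RL: "R \<in> Lc M (length \<Theta>)" using cc_ob_snocE[OF ob] .
  have rR: "r \<in> Rc M (length \<Theta>)" using ctR J .
  define N where "N = length \<Theta>"
  have "\<forall>i\<le>n. (Y @ subs M \<sigma> i m (drop i \<Theta>) @ [rho M N (m + (N - i)) (ext M \<sigma> i m (N - i)) R],
          bnd M N (m + (N - i)) (ext M \<sigma> i m (N - i)) r) \<in> Ct"
  proof (intro allI impI)
    fix i assume "i \<le> n"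
    then show "(Y @ subs M \<sigma> i m (drop i \<Theta>) @ [rho M N (m + (N - i)) (ext M \<sigma> i m (N - i)) R],
          bnd M N (m + (N - i)) (ext M \<sigma> i m (N - i)) r) \<in> Ct"
    proof (induction i)
      case 0
      show ?case using FW[OF Y J, of \<sigma>] m N_def by simp
    next
      case (Suc i)
      have i: "i < n" using Suc.prems by simp
      have IH: "(Y @ subs M \<sigma> i m (drop i \<Theta>) @ [rho M N (m + (N - i)) (ext M \<sigma> i m (N - i)) R],
          bnd M N (m + (N - i)) (ext M \<sigma> i m (N - i)) r) \<in> Ct" using Suc.IH i by simp
      define j where "j = N - Suc i"
      have Nij: "N - i = Suc j" "N = Suc (i + j)" using i nN by (auto simp: j_def N_def)
      have ksi: "kl_map M (Suc i) m \<sigma>" using kl_mono[OF k\<sigma>] i by simp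
      have ki: "kl_map M i m \<sigma>" using kl_mono[OF k\<sigma>] i by simp
      define S where "S = rho M i m (ext M \<sigma> i m 0) (\<Theta> ! i)"
      define Dl where "Dl = map (\<lambda>j'. rho M (Suc (i+j')) (Suc (m+j')) (ext M \<sigma> i m (Suc j')) (\<Theta> ! Suc (i+j'))) [0..<j]"
      define R' where "R' = rho M N (m + Suc j) (ext M \<sigma> i m (Suc j)) R"
      define r' where "r' = bnd M N (m + Suc j) (ext M \<sigma> i m (Suc j)) r"
      have sp: "subs M \<sigma> i m (drop i \<Theta>) = S # Dl"
      proof (rule nth_equalityI)
        show "length (subs M \<sigma> i m (drop i \<Theta>)) = length (S # Dl)"
          using Nij N_def by (simp add: Dl_def)
        fix q assume q: "q < length (subs M \<sigma> i m (drop i \<Theta>))"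
        then have q': "q < N - i" using N_def by simp
        show "subs M \<sigma> i m (drop i \<Theta>) ! q = (S # Dl) ! q"
        proof (cases q)
          case 0 then show ?thesis using q' N_def by (simp add: S_def)
        next
          case (Suc q0)
          then show ?thesis using q' N_def Nij by (simp add: Dl_def)
        qed
      qed
      have J1: "(Y @ [S] @ Dl @ [R'], r') \<in> Ct" using IH sp Nij by (simp add: R'_def r'_def)
      have Ti: "\<Theta> ! i \<in> Lc M i" using Th i nN by simp
      have "S = rho M i m \<sigma> (\<Theta> ! i)"
        unfolding S_def
        apply (rule rho_cong[OF _ ki _ Ti])
        using kl_ext[OF ki, of 0] apply simp
        using ext_0_eq[OF ki] by simp
      then have HS: "(Y @ [S], \<sigma> (Suc i)) \<in> Ct" using H[OF i] by simp
      have ldl: "length Dl = j" by (simp add: Dl_def)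
      have "(Y @ sb_seq M m (\<sigma> (Suc i)) Dl @ [sb_L M m (\<sigma> (Suc i)) (Suc m + j) R'],
          sb_R M m (\<sigma> (Suc i)) (Suc m + j) r') \<in> Ct"
        using c5[OF HS J1] m ldl by simp
      moreover have "sb_seq M m (\<sigma> (Suc i)) Dl = subs M \<sigma> (Suc i) m (drop (Suc i) \<Theta>)"
      proof (rule nth_equalityI)
        show "length (sb_seq M m (\<sigma> (Suc i)) Dl) = length (subs M \<sigma> (Suc i) m (drop (Suc i) \<Theta>))"
          using ldl j_def N_def by simp
        fix q assume "q < length (sb_seq M m (\<sigma> (Suc i)) Dl)"
        then have q: "q < j" using ldl by simp
        have E: "\<Theta> ! Suc (i + q) \<in> Lc M (Suc (i+q))" using Th q Nij N_def by simp
        show "sb_seq M m (\<sigma> (Suc i)) Dl ! q = subs M \<sigma> (Suc i) m (drop (Suc i) \<Theta>) ! q"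
          using q ldl sb_rho[OF ksi E] Nij N_def by (simp add: Dl_def sb_L_def)
      qed
      moreover have "sb_L M m (\<sigma> (Suc i)) (Suc m + j) R' = rho M N (m + (N - Suc i)) (ext M \<sigma> (Suc i) m (N - Suc i)) R"
        using sb_rho[OF ksi, where j=j and E=R] RL Nij N_def by (simp add: R'_def sb_L_def j_def[symmetric])
      moreover have "sb_R M m (\<sigma> (Suc i)) (Suc m + j) r' = bnd M N (m + (N - Suc i)) (ext M \<sigma> (Suc i) m (N - Suc i)) r"
        using sb_bnd[OF ksi, where j=j and r=r] rR Nij N_def by (simp add: r'_def sb_R_def j_def[symmetric])
      ultimately show ?case by simp
    qed
  qed
  then show ?thesis using N_def by simp
qed

end


definition morb :: "('r,'l) monmod \<Rightarrow> 'l list set \<Rightarrow> ('l list \<times> 'r) set \<Rightarrow> 'l list \<Rightarrow> 'l list \<Rightarrow> 'r list \<Rightarrow> bool" where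
  "morb M C Ct Y X f \<longleftrightarrow> Y \<in> C \<and> X \<in> C \<and> length f = length X \<and>
     (\<forall>i<length X. (Y @ [rho M i (length Y) (tf f) (X ! i)], f ! i) \<in> Ct)"

context bwd begin

abbreviation "mor \<equiv> morb M C Ct"

lemma mor_kl: "mor Y X f \<Longrightarrow> kl_map M (length X) (length Y) (tf f)"
  unfolding morb_def by (intro kl_tf) (metis ctR)

lemma mor_hom: "mor Y X f \<Longrightarrow> cc_hom M Y X f"
  unfolding morb_def cc_hom_def using obC ctR by metis

lemma SUB0: assumes Y: "Y \<in> C" and m: "length Y = m" and k\<sigma>: "kl_map M n m \<sigma>" and n: "length \<Gamma> = n"
  and H: "\<And>i. i < n \<Longrightarrow> (Y @ [rho M i m \<sigma> (\<Gamma> ! i)], \<sigma> (Suc i)) \<in> Ct"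
  and J: "(\<Gamma> @ [R], r) \<in> Ct"
  shows "(Y @ [rho M n m \<sigma> R], bnd M n m \<sigma> r) \<in> Ct"
proof -
  have "(Y @ subs M \<sigma> n m (drop n \<Gamma>) @ [rho M (length \<Gamma>) (m + (length \<Gamma> - n)) (ext M \<sigma> n m (length \<Gamma> - n)) R],
          bnd M (length \<Gamma>) (m + (length \<Gamma> - n)) (ext M \<sigma> n m (length \<Gamma> - n)) r) \<in> Ct"
    by (rule SUB[OF Y m k\<sigma> _ H J]) (simp_all add: n)
  then have 1: "(Y @ [rho M n m (ext M \<sigma> n m 0) R], bnd M n m (ext M \<sigma> n m 0) r) \<in> Ct"
    using n by simp
  have ob: "cc_ob M (\<Gamma> @ [R])" using ctob J .
  have RL: "R \<in> Lc M n" using cc_ob_snocE[OF ob] n by simp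
  have rR: "r \<in> Rc M n" using ctR[OF J] n by simp
  have ke: "kl_map M n m (ext M \<sigma> n m 0)" using kl_ext[OF k\<sigma>, of 0] by simp
  have "rho M n m (ext M \<sigma> n m 0) R = rho M n m \<sigma> R"
    by (rule rho_cong[OF ke k\<sigma> _ RL]) (simp add: ext_0_eq[OF k\<sigma>])
  moreover have "bnd M n m (ext M \<sigma> n m 0) r = bnd M n m \<sigma> r"
    by (rule bnd_cong[OF ke k\<sigma> _ rR]) (simp add: ext_0_eq[OF k\<sigma>])
  ultimately show ?thesis using 1 by simp
qed

lemma SUB1: assumes Y: "Y \<in> C" and m: "length Y = m" and k\<sigma>: "kl_map M n m \<sigma>" and n: "length \<Gamma> = n"
  and H: "\<And>i. i < n \<Longrightarrow> (Y @ [rho M i m \<sigma> (\<Gamma> ! i)], \<sigma> (Suc i)) \<in> Ct"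
  and J: "(\<Gamma> @ [A, R], r) \<in> Ct"
  shows "Y @ [rho M n m \<sigma> A] \<in> C"
proof -
  have H': "\<And>i. i < n \<Longrightarrow> (Y @ [rho M i m \<sigma> ((\<Gamma> @ [A]) ! i)], \<sigma> (Suc i)) \<in> Ct"
    using H n by (simp add: nth_append)
  have J': "((\<Gamma> @ [A]) @ [R], r) \<in> Ct" using J by simp
  have "(Y @ subs M \<sigma> n m (drop n (\<Gamma> @ [A])) @ [rho M (length (\<Gamma> @ [A])) (m + (length (\<Gamma> @ [A]) - n)) (ext M \<sigma> n m (length (\<Gamma> @ [A]) - n)) R],
          bnd M (length (\<Gamma> @ [A])) (m + (length (\<Gamma> @ [A]) - n)) (ext M \<sigma> n m (length (\<Gamma> @ [A]) - n)) r) \<in> Ct"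
    by (rule SUB[OF Y m k\<sigma> _ H' J']) (simp add: n)
  then have "((Y @ [rho M n m (ext M \<sigma> n m 0) A]) @ [rho M (Suc n) (Suc m) (ext M \<sigma> n m 1) R],
               bnd M (Suc n) (Suc m) (ext M \<sigma> n m 1) r) \<in> Ct"
    using n by (simp add: subs_def)
  then have "Y @ [rho M n m (ext M \<sigma> n m 0) A] \<in> C" using c3 c2 by metis
  moreover have ob: "cc_ob M (\<Gamma> @ [A, R])" using ctob J .
  then have AL: "A \<in> Lc M n" using n cc_obD[OF ob, of n] by (simp add: nth_append)
  have ke: "kl_map M n m (ext M \<sigma> n m 0)" using kl_ext[OF k\<sigma>, of 0] by simp
  have "rho M n m (ext M \<sigma> n m 0) A = rho M n m \<sigma> A"
    by (rule rho_cong[OF ke k\<sigma> _ AL]) (simp add: ext_0_eq[OF k\<sigma>])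
  ultimately show ?thesis by simp
qed

lemma mor_H: "mor Y X f \<Longrightarrow> i < length X \<Longrightarrow> (Y @ [rho M i (length Y) (tf f) (X ! i)], tf f (Suc i)) \<in> Ct"
  unfolding morb_def by (simp add: tf_nth)

lemma var_lemma': assumes G: "G \<in> C" and i: "i < length G"
  and f: "\<And>l. 1 \<le> l \<Longrightarrow> l \<le> i \<Longrightarrow> f l = eta M (length G) l"
  shows "(G @ [rho M i (length G) f (G ! i)], eta M (length G) (Suc i)) \<in> Ct"
proof -
  have Ei: "G ! i \<in> Lc M i" using obC[OF G] i cc_obD by blast
  have k1: "kl_map M i (length G) f" by (rule kl_mapI) (use i in \<open>simp add: f eta_in'\<close>)
  have "rho M i (length G) f (G ! i) = rho M i (length G) (eta M (length G)) (G ! i)"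
    by (rule rho_cong[OF k1 kl_eta _ Ei]) (simp_all add: f i less_imp_le)
  then show ?thesis using var_lemma[OF G i] by simp
qed

lemma mor_id: "G \<in> C \<Longrightarrow> mor G G (cc_id M G)"
  unfolding morb_def
  by (auto intro!: var_lemma' simp: tf_def)

lemma mor_comp: assumes f: "mor G D f" and g: "mor D T g"
  shows "mor G T (cc_comp M (length G) f g)"
proof -
  have G: "G \<in> C" and D: "D \<in> C" and T: "T \<in> C" and lf: "length f = length D" and lg: "length g = length T"
    using f g unfolding morb_def by auto
  have kf: "kl_map M (length D) (length G) (tf f)" using mor_kl[OF f] .
  have kg: "kl_map M (length T) (length D) (tf g)" using mor_kl[OF g] .
  have obT: "cc_ob M T" using obC T .
  show ?thesis unfolding morb_def
  proof (intro conjI allI impI)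
    show "G \<in> C" "T \<in> C" by fact+
    show "length (cc_comp M (length G) f g) = length T" using lg by simp
    fix i assume i: "i < length T"
    have Ji: "(D @ [rho M i (length D) (tf g) (T ! i)], g ! i) \<in> Ct" using g i unfolding morb_def by auto
    have "(G @ [rho M (length D) (length G) (tf f) (rho M i (length D) (tf g) (T ! i))],
           bnd M (length D) (length G) (tf f) (g ! i)) \<in> Ct"
      by (rule SUB0[OF G refl kf refl _ Ji]) (rule mor_H[OF f], simp)
    moreover have "rho M (length D) (length G) (tf f) (rho M i (length D) (tf g) (T ! i))
        = rho M i (length G) (tf (cc_comp M (length G) f g)) (T ! i)"
      apply (rule rho_comp'[OF kl_mono[OF kg] kf])
      using i obT cc_obD lg lf by (auto simp: tf_def)
    ultimately show "(G @ [rho M i (length G) (tf (cc_comp M (length G) f g)) (T ! i)],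
        cc_comp M (length G) f g ! i) \<in> Ct" using i lg lf by simp
  qed
qed

end


context bwd begin

lemma butlast_C: "X \<in> C \<Longrightarrow> X \<noteq> [] \<Longrightarrow> butlast X \<in> C"
  using c2[of "butlast X" "last X"] by simp

lemma mor_p: assumes X: "X \<in> C" and ne: "X \<noteq> []"
  shows "mor X (butlast X) (cc_pl M X)"
  unfolding morb_def
proof (intro conjI allI impI)
  show "X \<in> C" "butlast X \<in> C" using X ne butlast_C by auto
  show "length (cc_pl M X) = length (butlast X)" by simp
  fix i assume i: "i < length (butlast X)"
  then have i': "i < length X" by simp
  have "(X @ [rho M i (length X) (tf (cc_pl M X)) (X ! i)], eta M (length X) (Suc i)) \<in> Ct"
    by (rule var_lemma'[OF X i']) (use i in \<open>simp add: tf_def\<close>)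
  then show "(X @ [rho M i (length X) (tf (cc_pl M X)) (butlast X ! i)], cc_pl M X ! i) \<in> Ct"
    using i by (simp add: nth_butlast)
qed

lemma wk_rho_ql: assumes E: "E \<in> Lc M i" and i: "i \<le> n" and kf: "kl_map M n m (tf f)"
  and lf: "length f = n" and lY: "length Y = m"
  shows "wk_L M m m (rho M i m (tf f) E) = rho M i (Suc m) (tf (cc_ql M f Y)) E"
  unfolding wk_L_def
proof (rule rho_comp'[OF kl_mono[OF kf i] kl_wk E])
  fix l assume l: "1 \<le> l" "l \<le> i"
  have fl: "tf f l \<in> Rc M m" using kf l i kl_mapD by simp
  have "bnd M m (Suc m) (wk_map M m m) (tf f l) = incl M m (Suc m) (tf f l)"
    by (rule bnd_incl_cong[OF _ kl_wk _ fl]) (simp_all add: wk_map_def)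
  also have "\<dots> = tf (cc_ql M f Y) l"
  proof -
    have "l - 1 < n" using l i by simp
    then show ?thesis using l lf lY by (simp add: tf_def cc_ql_def nth_append)
  qed
  finally show "bnd M m (Suc m) (wk_map M m m) (tf f l) = tf (cc_ql M f Y) l" .
qed

lemma mor_pb: assumes X: "X \<in> C" and ne: "X \<noteq> []" and f: "mor Y (butlast X) f"
  shows "cc_pb M f Y X \<in> C \<and> mor (cc_pb M f Y X) X (cc_ql M f Y)"
proof -
  define n where "n = length X - 1"
  define m where "m = length Y"
  have Xs: "X = butlast X @ [last X]" using ne by simp
  have lb: "length (butlast X) = n" by (simp add: n_def)
  have Y: "Y \<in> C" and lf: "length f = n" using f unfolding morb_def by (auto simp: n_def)
  have kf: "kl_map M n m (tf f)" using mor_kl[OF f] lb m_def by simp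
  have obX: "cc_ob M X" using obC X .
  have lastL: "last X \<in> Lc M n" using cc_ob_snocE[of M "butlast X" "last X"] obX Xs lb by simp
  define T' where "T' = rho M n m (tf f) (last X)"
  have pb: "cc_pb M f Y X = Y @ [T']" by (simp add: cc_pb_def T'_def n_def m_def)
  have c6X: "(butlast X @ [last X, wk_L M n n (last X)], eta M (Suc n) (Suc n)) \<in> Ct"
    using c6[of "butlast X" "last X"] X Xs lb by simp
  have YT: "Y @ [T'] \<in> C" unfolding T'_def
    by (rule SUB1[OF Y m_def[symmetric] kf lb _ c6X]) (use mor_H[OF f] lb m_def in simp)
  have "mor (Y @ [T']) X (cc_ql M f Y)" unfolding morb_def
  proof (intro conjI allI impI)
    show "Y @ [T'] \<in> C" "X \<in> C" by fact+
    show "length (cc_ql M f Y) = length X" using lf ne by (simp add: n_def)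
    fix i assume i: "i < length X"
    have E: "X ! i \<in> Lc M i" using obX i cc_obD by blast
    show "((Y @ [T']) @ [rho M i (length (Y @ [T'])) (tf (cc_ql M f Y)) (X ! i)], cc_ql M f Y ! i) \<in> Ct"
    proof (cases "i < n")
      case True
      have "(Y @ [rho M i m (tf f) (butlast X ! i)], f ! i) \<in> Ct"
        using f True lb unfolding morb_def m_def by auto
      then have J: "(Y @ [] @ [rho M i m (tf f) (X ! i)], f ! i) \<in> Ct" using True lb by (simp add: nth_butlast)
      have "(Y @ [T'] @ [] @ [wk_L M m m (rho M i m (tf f) (X ! i))], wk_R M m m (f ! i)) \<in> Ct"
        using c4[OF YT J] m_def by simp
      moreover have "wk_L M m m (rho M i m (tf f) (X ! i)) = rho M i (Suc m) (tf (cc_ql M f Y)) (X ! i)"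
        using wk_rho_ql[OF E _ kf lf m_def[symmetric]] True by simp
      moreover have fi: "f ! i \<in> Rc M m" using kf True kl_mapD[of n m "tf f" "Suc i"] by (simp add: tf_nth)
      have "wk_R M m m (f ! i) = incl M m (Suc m) (f ! i)"
        unfolding wk_R_def by (rule bnd_incl_cong[OF _ kl_wk _ fi]) (simp_all add: wk_map_def)
      then have "wk_R M m m (f ! i) = cc_ql M f Y ! i"
        using True lf m_def by (simp add: cc_ql_def nth_append)
      ultimately show ?thesis using m_def by simp
    next
      case False
      then have iN: "i = n" using i n_def by simp
      have "(Y @ [T', wk_L M m m T'], eta M (Suc m) (Suc m)) \<in> Ct" using c6[OF YT] m_def by simp
      moreover have "wk_L M m m T' = rho M n (Suc m) (tf (cc_ql M f Y)) (X ! n)"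
        unfolding T'_def using wk_rho_ql[OF lastL _ kf lf m_def[symmetric]] Xs lb
        by (metis le_refl nth_append_length)
      moreover have "cc_ql M f Y ! n = eta M (Suc m) (Suc m)"
        using lf m_def by (simp add: cc_ql_def nth_append)
      ultimately show ?thesis using iN m_def by simp
    qed
  qed
  then show ?thesis using pb YT by simp
qed

lemma mor_sf: assumes f: "mor Y X f" and ne: "X \<noteq> []"
  shows "mor Y (cc_pb M (cc_pf M Y X f) Y X) (cc_sf M Y X f)"
proof -
  define n where "n = length X - 1"
  define m where "m = length Y"
  have h: "cc_hom M Y X f" using mor_hom[OF f] .
  have sf: "cc_sf M Y X f = cc_id M Y @ [last f]" using sf_eq[OF h ne] .
  have Y: "Y \<in> C" and lf: "length f = length X" and X: "X \<in> C" using f unfolding morb_def by auto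
  have kf: "kl_map M (length X) m (tf f)" using mor_kl[OF f] m_def by simp
  have kfn: "kl_map M n m (tf f)" using kl_mono[OF kf] n_def by simp
  have obX: "cc_ob M X" using obC X .
  have lastX: "last X = X ! n" using ne by (simp add: last_conv_nth n_def)
  have lastf: "last f = f ! n" using ne lf by (metis last_conv_nth length_0_conv n_def)
  have nX: "n < length X" using ne n_def by simp
  have XnL: "X ! n \<in> Lc M n" using cc_obD[OF obX nX] .
  have kpf: "kl_map M n m (tf (cc_pf M Y X f))"
  proof (rule kl_tf)
    fix i assume i: "i < n"
    have "tf f (Suc i) \<in> Rc M m" using kl_mapD[OF kfn, of "Suc i"] i by simp
    then show "cc_pf M Y X f ! i \<in> Rc M m" using nth_cc_pf[OF h, of i] i by (simp add: n_def tf_nth)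
  qed
  have "rho M n m (tf (cc_pf M Y X f)) (X ! n) = rho M n m (tf f) (X ! n)"
  proof (rule rho_cong[OF kpf kfn _ XnL])
    fix l assume "l \<in> {1..n}"
    then have "l - 1 < length X - 1" using n_def by auto
    then show "tf (cc_pf M Y X f) l = tf f l" using nth_cc_pf[OF h] by (simp add: tf_def)
  qed
  then have Z: "cc_pb M (cc_pf M Y X f) Y X = Y @ [rho M n m (tf f) (X ! n)]"
    by (simp add: cc_pb_def lastX n_def m_def)
  define T'' where "T'' = rho M n m (tf f) (X ! n)"
  have Jn: "(Y @ [T''], f ! n) \<in> Ct" using f nX unfolding morb_def T''_def m_def by auto
  have ZC: "Y @ [T''] \<in> C" using c3[OF Jn] .
  have T''L: "T'' \<in> Lc M m" using cc_ob_snocE[OF ctob[OF Jn]] m_def by simp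
  show ?thesis unfolding sf Z T''_def[symmetric] morb_def
  proof (intro conjI allI impI)
    show "Y \<in> C" "Y @ [T''] \<in> C" by fact+
    show "length (cc_id M Y @ [last f]) = length (Y @ [T''])" by simp
    fix i assume i: "i < length (Y @ [T''])"
    show "(Y @ [rho M i (length Y) (tf (cc_id M Y @ [last f])) ((Y @ [T'']) ! i)], (cc_id M Y @ [last f]) ! i) \<in> Ct"
    proof (cases "i < m")
      case True
      have "(Y @ [rho M i (length Y) (tf (cc_id M Y @ [last f])) (Y ! i)], eta M (length Y) (Suc i)) \<in> Ct"
      proof (rule var_lemma'[OF Y])
        show "i < length Y" using True m_def by simp
        fix l assume "1 \<le> l" "l \<le> i"
        then have "l - 1 < length Y" using True m_def by simp
        then show "tf (cc_id M Y @ [last f]) l = eta M (length Y) l" using `1 \<le> l` by (simp add: tf_def nth_append)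
      qed
      then show ?thesis using True m_def by (simp add: nth_append)
    next
      case False
      then have im: "i = m" using i m_def by simp
      have "rho M m m (tf (cc_id M Y @ [last f])) T'' = T''"
      proof (rule rho_id'[OF _ T''L])
        fix l assume "1 \<le> l" "l \<le> m"
        then have "l - 1 < length Y" using m_def by simp
        then show "tf (cc_id M Y @ [last f]) l = eta M m l" using `1 \<le> l` m_def by (simp add: tf_def nth_append)
      qed
      then show ?thesis using im Jn lastf m_def by (simp add: nth_append)
    qed
  qed
qed

end


context bwd begin

definition "MorB = {(Y, X, f). mor Y X f}"

lemma subsys: "cc_subsystem M C MorB"
  unfolding cc_subsystem_def MorB_def
proof (intro conjI ballI allI impI)
  show "\<And>x. x \<in> {(Y, X, f). mor Y X f} \<Longrightarrow> case x of (G, D, f) \<Rightarrow> cc_hom M G D f \<and> G \<in> C \<and> D \<in> C"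
    using mor_hom by (auto simp: morb_def)
  show "\<And>G. G \<in> C \<Longrightarrow> cc_ob M G" using obC .
  show "\<And>G. G \<in> C \<Longrightarrow> (G, G, cc_id M G) \<in> {(Y, X, f). mor Y X f}" using mor_id by auto
  show "\<And>G D T f g. (G, D, f) \<in> {(Y, X, f). mor Y X f} \<and> (D, T, g) \<in> {(Y, X, f). mor Y X f} \<Longrightarrow>
       (G, T, cc_comp M (length G) f g) \<in> {(Y, X, f). mor Y X f}" using mor_comp by auto
  show "[] \<in> C" using c1 .
  show "\<And>X. X \<in> C \<Longrightarrow> X \<noteq> [] \<Longrightarrow> butlast X \<in> C" using butlast_C .
  show "\<And>X. X \<in> C \<Longrightarrow> X \<noteq> [] \<Longrightarrow> cc_p M X \<in> {(Y, X, f). mor Y X f}"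
    using mor_p by (auto simp: cc_p_def)
  show "\<And>X Y f. X \<in> C \<Longrightarrow> X \<noteq> [] \<Longrightarrow> (Y, butlast X, f) \<in> {(Y, X, f). mor Y X f} \<Longrightarrow> cc_pb M f Y X \<in> C"
    using mor_pb by auto
  show "\<And>X Y f. X \<in> C \<Longrightarrow> X \<noteq> [] \<Longrightarrow> (Y, butlast X, f) \<in> {(Y, X, f). mor Y X f} \<Longrightarrow> cc_q M Y f X \<in> {(Y, X, f). mor Y X f}"
    using mor_pb by (auto simp: cc_q_def)
  show "\<And>Y X f. (Y, X, f) \<in> {(Y, X, f). mor Y X f} \<and> X \<noteq> [] \<Longrightarrow>
       (Y, cc_pb M (cc_pf M Y X f) Y X, cc_sf M Y X f) \<in> {(Y, X, f). mor Y X f}"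
    using mor_sf by auto
qed

lemma tilde: "tilde_ob M MorB = Ct"
proof
  show "tilde_ob M MorB \<subseteq> Ct"
  proof
    fix p assume "p \<in> tilde_ob M MorB"
    then obtain X s where p: "p = (X, last s)" and ne: "X \<noteq> []" and ms: "mor (butlast X) X s"
      and ce: "cc_comp M (length X - 1) s (cc_pl M X) = cc_id M (butlast X)"
      unfolding tilde_ob_def MorB_def by auto
    define n where "n = length X - 1"
    have ls: "length s = Suc n" using ms ne unfolding morb_def n_def by auto
    have ks: "kl_map M (Suc n) n (tf s)" using mor_kl[OF ms] ne n_def by simp
    have si: "s ! i = eta M n (Suc i)" if i: "i < n" for i
    proof -
      have "cc_comp M (length X - 1) s (cc_pl M X) ! i = cc_id M (butlast X) ! i" using ce by simp
      moreover have "cc_comp M (length X - 1) s (cc_pl M X) ! i = bnd M (Suc n) n (tf s) (eta M (Suc n) (Suc i))"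
        using i ls ne n_def by simp
      moreover have "bnd M (Suc n) n (tf s) (eta M (Suc n) (Suc i)) = s ! i"
        using bnd_eta_left'[OF ks, of "Suc i"] i by (simp add: tf_nth)
      ultimately show ?thesis using i n_def by simp
    qed
    have nX: "n < length X" using ne n_def by simp
    have XnL: "X ! n \<in> Lc M n" using cc_obD[OF obC nX] ms unfolding morb_def by auto
    have J: "(butlast X @ [rho M n n (tf s) (X ! n)], s ! n) \<in> Ct"
      using ms nX ne unfolding morb_def n_def by auto
    have "rho M n n (tf s) (X ! n) = X ! n"
      by (rule rho_id'[OF _ XnL]) (simp add: tf_def si)
    moreover have "butlast X @ [X ! n] = X" using ne n_def by (metis append_butlast_last_id last_conv_nth)
    moreover have "s ! n = last s"
    proof -
      have "s \<noteq> []" using ls by auto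
      then show ?thesis using ls by (simp add: last_conv_nth)
    qed
    ultimately show "p \<in> Ct" using J p by simp
  qed
next
  show "Ct \<subseteq> tilde_ob M MorB"
  proof
    fix p assume pC: "p \<in> Ct"
    obtain X r where p: "p = (X, r)" by (cases p)
    have J: "(X, r) \<in> Ct" using pC p by simp
    have ne: "X \<noteq> []" using ctw[OF J] by simp
    define G where "G = butlast X"
    define R where "R = last X"
    define n where "n = length G"
    have XG: "X = G @ [R]" using ne by (simp add: G_def R_def)
    have JG: "(G @ [R], r) \<in> Ct" using J XG by simp
    have XC: "X \<in> C" using c3[OF JG] XG by simp
    have GC: "G \<in> C" using c2 XC XG by simp
    have rR: "r \<in> Rc M n" using ctR[OF JG] n_def by simp
    have RL: "R \<in> Lc M n" using cc_ob_snocE[OF ctob[OF JG]] n_def by simp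
    define s where "s = cc_id M G @ [r]"
    have ls: "length s = Suc n" by (simp add: s_def n_def)
    have tfs: "tf s l = eta M n l" if "1 \<le> l" "l \<le> n" for l
    proof -
      have "l - 1 < n" using that by simp
      then show ?thesis using that by (simp add: s_def tf_def nth_append n_def)
    qed
    have sn: "s ! n = r" by (simp add: s_def nth_append n_def)
    have ks: "kl_map M (Suc n) n (tf s)"
    proof (rule kl_tf)
      fix i assume "i < Suc n"
      then show "s ! i \<in> Rc M n" using rR by (cases "i < n") (auto simp: s_def nth_append n_def eta_in')
    qed
    have ms: "mor G X s" unfolding morb_def
    proof (intro conjI allI impI)
      show "G \<in> C" "X \<in> C" by fact+
      show "length s = length X" using ls XG n_def by simp
      fix i assume i: "i < length X"
      show "(G @ [rho M i (length G) (tf s) (X ! i)], s ! i) \<in> Ct"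
      proof (cases "i < n")
        case True
        have "(G @ [rho M i (length G) (tf s) (G ! i)], eta M (length G) (Suc i)) \<in> Ct"
        proof (rule var_lemma'[OF GC])
          show "i < length G" using True n_def by simp
          fix l assume "1 \<le> l" "l \<le> i"
          then show "tf s l = eta M (length G) l" using tfs[of l] True n_def by simp
        qed
        then show ?thesis using True XG n_def by (simp add: nth_append s_def)
      next
        case False
        then have "i = n" using i XG n_def by simp
        moreover have "rho M n n (tf s) R = R" by (rule rho_id'[OF tfs RL])
        ultimately show ?thesis using JG XG sn n_def by simp
      qed
    qed
    have ce: "cc_comp M (length X - 1) s (cc_pl M X) = cc_id M (butlast X)"
    proof (rule nth_equalityI)
      show "length (cc_comp M (length X - 1) s (cc_pl M X)) = length (cc_id M (butlast X))" by simp
      fix i assume "i < length (cc_comp M (length X - 1) s (cc_pl M X))"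
      then have i: "i < n" using XG n_def by simp
      have "bnd M (Suc n) n (tf s) (eta M (Suc n) (Suc i)) = tf s (Suc i)"
        using bnd_eta_left'[OF ks, of "Suc i"] i by simp
      then show "cc_comp M (length X - 1) s (cc_pl M X) ! i = cc_id M (butlast X) ! i"
        using i XG n_def ls tfs[of "Suc i"] by (simp add: G_def[symmetric])
    qed
    have ls': "last s = r" by (simp add: s_def)
    have mem: "(butlast X, X, s) \<in> MorB" using ms G_def by (simp add: MorB_def)
    show "p \<in> tilde_ob M MorB"
      unfolding tilde_ob_def p
      apply (rule CollectI)
      apply (rule exI[of _ X], rule exI[of _ s])
      using ne mem ce ls' by simp
  qed
qed

lemma bwd_main: "\<exists>Mor. cc_subsystem M C Mor \<and> tilde_ob M Mor = Ct"
  using subsys tilde by blast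

end


lemma subs_snoc: "subs M \<sigma> a b (D @ [E]) = subs M \<sigma> a b D @ [rho M (a + length D) (b + length D) (ext M \<sigma> a b (length D)) E]"
  by (rule nth_equalityI) (auto simp: nth_append less_Suc_eq)

context mm begin

lemma ext_incl: assumes k: "kl_map M a b \<sigma>" and l: "1 \<le> l" "l \<le> a + d"
  shows "incl M (b+d) (Suc (b+d)) (ext M \<sigma> a b d l) = ext M \<sigma> a b (Suc d) l"
proof (cases "l \<le> a")
  case True
  have "\<sigma> l \<in> Rc M b" using k l True kl_mapD by simp
  then show ?thesis using True by (simp add: ext_def incl_incl)
next
  case False
  then show ?thesis using l by (simp add: ext_def incl_eta)
qed

end

locale fwd = mm M for M :: "('r,'l) monmod" +
  fixes C :: "'l list set" and Mor :: "('l list \<times> 'l list \<times> 'r list) set"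
  assumes sub: "cc_subsystem M C Mor"
begin

lemma M1: "(G, D, f) \<in> Mor \<Longrightarrow> cc_hom M G D f \<and> G \<in> C \<and> D \<in> C"
proof -
  assume a: "(G, D, f) \<in> Mor"
  have "\<forall>(G, D, f)\<in>Mor. cc_hom M G D f \<and> G \<in> C \<and> D \<in> C"
    using sub unfolding cc_subsystem_def by (elim conjE)
  then show ?thesis using a by fastforce
qed
lemma M2: "G \<in> C \<Longrightarrow> cc_ob M G \<and> (G, G, cc_id M G) \<in> Mor"
proof -
  have "\<forall>G\<in>C. cc_ob M G \<and> (G, G, cc_id M G) \<in> Mor"
    using sub unfolding cc_subsystem_def by (elim conjE)
  then show "G \<in> C \<Longrightarrow> ?thesis" by simp
qed
lemma M3: "(G, D, f) \<in> Mor \<Longrightarrow> (D, T, g) \<in> Mor \<Longrightarrow> (G, T, cc_comp M (length G) f g) \<in> Mor"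
proof -
  have "\<forall>G D T f g. (G, D, f) \<in> Mor \<and> (D, T, g) \<in> Mor \<longrightarrow> (G, T, cc_comp M (length G) f g) \<in> Mor"
    using sub unfolding cc_subsystem_def by (elim conjE)
  then show "(G, D, f) \<in> Mor \<Longrightarrow> (D, T, g) \<in> Mor \<Longrightarrow> ?thesis" by blast
qed
lemma M4: "[] \<in> C"
  using sub unfolding cc_subsystem_def by (elim conjE)
lemma M5: "X \<in> C \<Longrightarrow> X \<noteq> [] \<Longrightarrow> butlast X \<in> C \<and> cc_p M X \<in> Mor"
proof -
  have "\<forall>X\<in>C. X \<noteq> [] \<longrightarrow> butlast X \<in> C \<and> cc_p M X \<in> Mor"
    using sub unfolding cc_subsystem_def by (elim conjE)
  then show "X \<in> C \<Longrightarrow> X \<noteq> [] \<Longrightarrow> ?thesis" by blast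
qed
lemma M6: "X \<in> C \<Longrightarrow> X \<noteq> [] \<Longrightarrow> (Y, butlast X, f) \<in> Mor \<Longrightarrow> cc_pb M f Y X \<in> C \<and> cc_q M Y f X \<in> Mor"
proof -
  have "\<forall>X\<in>C. X \<noteq> [] \<longrightarrow> (\<forall>Y f. (Y, butlast X, f) \<in> Mor \<longrightarrow> cc_pb M f Y X \<in> C \<and> cc_q M Y f X \<in> Mor)"
    using sub unfolding cc_subsystem_def by (elim conjE)
  then show "X \<in> C \<Longrightarrow> X \<noteq> [] \<Longrightarrow> (Y, butlast X, f) \<in> Mor \<Longrightarrow> ?thesis" by blast
qed
lemma M7: "(Y, X, f) \<in> Mor \<Longrightarrow> X \<noteq> [] \<Longrightarrow> (Y, cc_pb M (cc_pf M Y X f) Y X, cc_sf M Y X f) \<in> Mor"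
proof -
  have "\<forall>Y X f. (Y, X, f) \<in> Mor \<and> X \<noteq> [] \<longrightarrow> (Y, cc_pb M (cc_pf M Y X f) Y X, cc_sf M Y X f) \<in> Mor"
    using sub unfolding cc_subsystem_def by (elim conjE)
  then show "(Y, X, f) \<in> Mor \<Longrightarrow> X \<noteq> [] \<Longrightarrow> ?thesis" by blast
qed

abbreviation "Ctf \<equiv> tilde_ob M Mor"

lemma tilde_mem: assumes ne: "X \<noteq> []" and m: "(butlast X, X, s) \<in> Mor"
  and si: "\<And>i. i < length X - 1 \<Longrightarrow> s ! i = eta M (length X - 1) (Suc i)"
  shows "(X, last s) \<in> Ctf"
proof -
  have h: "cc_hom M (butlast X) X s" using M1[OF m] by simp
  have ls: "length s = length X" using h unfolding cc_hom_def by simp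
  have ks: "kl_map M (length X) (length X - 1) (tf s)" using cc_hom_kl[OF h] by simp
  have ce: "cc_comp M (length X - 1) s (cc_pl M X) = cc_id M (butlast X)"
  proof (rule nth_equalityI)
    show "length (cc_comp M (length X - 1) s (cc_pl M X)) = length (cc_id M (butlast X))" by simp
    fix i assume "i < length (cc_comp M (length X - 1) s (cc_pl M X))"
    then have i: "i < length X - 1" by simp
    have "bnd M (length X) (length X - 1) (tf s) (eta M (length X) (Suc i)) = tf s (Suc i)"
      using bnd_eta_left'[OF ks, of "Suc i"] i by simp
    then show "cc_comp M (length X - 1) s (cc_pl M X) ! i = cc_id M (butlast X) ! i"
      using i ls si[OF i] by (simp add: tf_nth)
  qed
  show ?thesis unfolding tilde_ob_def
    apply (rule CollectI)
    apply (rule exI[of _ X], rule exI[of _ s])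
    using ne m ce by simp
qed

lemma tilde_dest: assumes "(X, r) \<in> Ctf"
  obtains s where "X \<noteq> []" "(butlast X, X, s) \<in> Mor" "length s = length X"
    "\<And>i. i < length X - 1 \<Longrightarrow> s ! i = eta M (length X - 1) (Suc i)" "last s = r"
proof -
  obtain s where ne: "X \<noteq> []" and m: "(butlast X, X, s) \<in> Mor" and r: "r = last s"
    and ce: "cc_comp M (length X - 1) s (cc_pl M X) = cc_id M (butlast X)"
    using assms unfolding tilde_ob_def by auto
  have h: "cc_hom M (butlast X) X s" using M1[OF m] by simp
  have ls: "length s = length X" using h unfolding cc_hom_def by simp
  have ks: "kl_map M (length X) (length X - 1) (tf s)" using cc_hom_kl[OF h] by simp
  have si: "s ! i = eta M (length X - 1) (Suc i)" if i: "i < length X - 1" for i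
  proof -
    have "cc_comp M (length X - 1) s (cc_pl M X) ! i = cc_id M (butlast X) ! i" using ce by simp
    moreover have "bnd M (length X) (length X - 1) (tf s) (eta M (length X) (Suc i)) = s ! i"
      using bnd_eta_left'[OF ks, of "Suc i"] i by (simp add: tf_nth)
    ultimately show ?thesis using i ls by simp
  qed
  show ?thesis using that ne m ls si r by blast
qed

lemma M7_tilde: assumes m: "(Y, X, h) \<in> Mor" and ne: "X \<noteq> []"
  shows "(Y @ [rho M (length X - 1) (length Y) (tf (cc_pf M Y X h)) (last X)], last h) \<in> Ctf"
proof -
  have hh: "cc_hom M Y X h" using M1[OF m] by simp
  have m7: "(Y, cc_pb M (cc_pf M Y X h) Y X, cc_id M Y @ [last h]) \<in> Mor"
    using M7[OF m ne] sf_eq[OF hh ne] by simp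
  have Z: "cc_pb M (cc_pf M Y X h) Y X = Y @ [rho M (length X - 1) (length Y) (tf (cc_pf M Y X h)) (last X)]"
    by (simp add: cc_pb_def)
  have "(Y @ [rho M (length X - 1) (length Y) (tf (cc_pf M Y X h)) (last X)], last (cc_id M Y @ [last h])) \<in> Ctf"
    by (rule tilde_mem) (use m7 Z in \<open>simp_all add: nth_append\<close>)
  then show ?thesis by simp
qed

lemma SecPB: assumes w: "(Y, X', w) \<in> Mor" and J: "(X' @ [R], r) \<in> Ctf"
  shows "(Y @ [rho M (length X') (length Y) (tf w) R], bnd M (length X') (length Y) (tf w) r) \<in> Ctf"
proof -
  define n where "n = length X'"
  define m where "m = length Y"
  obtain s where ms: "(X', X' @ [R], s) \<in> Mor" and ls: "length s = Suc n"
    and si: "\<And>i. i < n \<Longrightarrow> s ! i = eta M n (Suc i)" and lr: "last s = r"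
    using tilde_dest[OF J] n_def by auto
  have hw: "cc_hom M Y X' w" using M1[OF w] by simp
  have lw: "length w = n" using hw unfolding cc_hom_def n_def by simp
  have kw: "kl_map M n m (tf w)" using cc_hom_kl[OF hw] n_def m_def by simp
  have hs: "cc_hom M X' (X' @ [R]) s" using M1[OF ms] by simp
  have srr: "\<And>i. i < Suc n \<Longrightarrow> s ! i \<in> Rc M n" using hs ls unfolding cc_hom_def n_def by simp
  define h where "h = cc_comp M m w s"
  have mh: "(Y, X' @ [R], h) \<in> Mor" using M3[OF w ms] h_def m_def by simp
  have hi: "h ! i = bnd M n m (tf w) (s ! i)" if "i < Suc n" for i
    using that ls lw by (simp add: h_def)
  have "(Y @ [rho M n m (tf (cc_pf M Y (X' @ [R]) h)) R], last h) \<in> Ctf"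
    using M7_tilde[OF mh] n_def m_def by simp
  moreover have "last h = bnd M n m (tf w) r"
  proof -
    have lh: "length h = Suc n" using ls by (simp add: h_def)
    then have "h \<noteq> []" by auto
    then have "last h = h ! n" using lh by (simp add: last_conv_nth)
    also have "\<dots> = bnd M n m (tf w) (s ! n)" using hi by simp
    also have "s ! n = r" using lr ls by (metis diff_Suc_1 last_conv_nth length_0_conv nat.distinct(1))
    finally show ?thesis .
  qed
  moreover have "rho M n m (tf (cc_pf M Y (X' @ [R]) h)) R = rho M n m (tf w) R"
  proof -
    have hh: "cc_hom M Y (X' @ [R]) h" using M1[OF mh] by simp
    have pfi: "cc_pf M Y (X' @ [R]) h ! i = tf w (Suc i)" if i: "i < n" for i
    proof -
      have "cc_pf M Y (X' @ [R]) h ! i = h ! i" using nth_cc_pf[OF hh] i n_def by simp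
      also have "\<dots> = bnd M n m (tf w) (eta M n (Suc i))" using hi i si by simp
      also have "\<dots> = tf w (Suc i)" using bnd_eta_left'[OF kw, of "Suc i"] i by simp
      finally show ?thesis .
    qed
    have k1: "kl_map M n m (tf (cc_pf M Y (X' @ [R]) h))"
    proof (rule kl_tf)
      fix i assume "i < n" then show "cc_pf M Y (X' @ [R]) h ! i \<in> Rc M m"
        using pfi kl_mapD[OF kw, of "Suc i"] by simp
    qed
    have RL: "R \<in> Lc M n" using cc_ob_snocE[of M X' R] hs n_def unfolding cc_hom_def by simp
    show ?thesis
    proof (rule rho_cong[OF k1 kw _ RL])
      fix l assume l: "l \<in> {1..n}"
      then have "l - 1 < n" "Suc (l - 1) = l" by auto
      then show "tf (cc_pf M Y (X' @ [R]) h) l = tf w l" using pfi[of "l - 1"] by (simp add: tf_def)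
    qed
  qed
  ultimately show ?thesis using n_def m_def by simp
qed

end


context fwd begin

lemma Lift: assumes w: "(Y, X, w) \<in> Mor" and XD: "X @ D \<in> C"
  shows "\<exists>w'. (Y @ subs M (tf w) (length X) (length Y) D, X @ D, w') \<in> Mor \<and> length w' = length X + length D \<and>
     (\<forall>l. 1 \<le> l \<longrightarrow> l \<le> length X + length D \<longrightarrow> tf w' l = ext M (tf w) (length X) (length Y) (length D) l)"
  using XD
proof (induction D rule: rev_induct)
  define a where "a = length X"
  define b where "b = length Y"
  have hw: "cc_hom M Y X w" using M1[OF w] by simp
  have kw: "kl_map M a b (tf w)" using cc_hom_kl[OF hw] a_def b_def by simp
  case Nil
  have lw: "length w = a" using hw unfolding cc_hom_def a_def by simp
  have "\<forall>l. 1 \<le> l \<longrightarrow> l \<le> a \<longrightarrow> tf w l = ext M (tf w) a b 0 l"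
    using kw by (auto simp: ext_def incl_same kl_mapD)
  then show ?case using w lw a_def b_def by auto
next
  define a where "a = length X"
  define b where "b = length Y"
  have hw: "cc_hom M Y X w" using M1[OF w] by simp
  have kw: "kl_map M a b (tf w)" using cc_hom_kl[OF hw] a_def b_def by simp
  case (snoc E D)
  define d where "d = length D"
  have ne: "X @ D @ [E] \<noteq> []" by simp
  have XDC: "X @ D \<in> C" using M5[OF _ ne] snoc.prems by (metis append_assoc butlast_snoc)
  obtain w' where mw': "(Y @ subs M (tf w) a b D, X @ D, w') \<in> Mor" and lw': "length w' = a + d"
    and tw': "\<And>l. 1 \<le> l \<Longrightarrow> l \<le> a + d \<Longrightarrow> tf w' l = ext M (tf w) a b d l"
    using snoc.IH[OF XDC] a_def b_def d_def by auto
  define Y' where "Y' = Y @ subs M (tf w) a b D"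
  have lY': "length Y' = b + d" by (simp add: Y'_def b_def d_def)
  have m6: "cc_pb M w' Y' (X @ D @ [E]) \<in> C \<and> cc_q M Y' w' (X @ D @ [E]) \<in> Mor"
    using M6[OF snoc.prems[simplified] ne] mw' Y'_def by (simp add: butlast_append)
  have hw': "cc_hom M Y' (X @ D) w'" using M1 mw' Y'_def by blast
  have kw': "kl_map M (a + d) (b + d) (tf w')" using cc_hom_kl[OF hw'] lY' a_def d_def by simp
  have obXDE: "cc_ob M (X @ D @ [E])" using M2 snoc.prems by simp
  have EL: "E \<in> Lc M (a + d)" using cc_ob_snocE[of M "X @ D" E] obXDE a_def d_def by simp
  have "rho M (a + d) (b + d) (tf w') E = rho M (a + d) (b + d) (ext M (tf w) a b d) E"
    by (rule rho_cong[OF kw' kl_ext[OF kw] _ EL]) (simp add: tw')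
  then have pb: "cc_pb M w' Y' (X @ D @ [E]) = Y @ subs M (tf w) a b (D @ [E])"
    using lY' by (simp add: cc_pb_def Y'_def subs_snoc a_def d_def)
  define w'' where "w'' = cc_ql M w' Y'"
  have mw'': "(Y @ subs M (tf w) a b (D @ [E]), X @ D @ [E], w'') \<in> Mor"
    using m6 pb by (simp add: cc_q_def w''_def)
  have lw'': "length w'' = a + length (D @ [E])" using lw' by (simp add: w''_def d_def)
  have tw'': "tf w'' l = ext M (tf w) a b (Suc d) l" if l: "1 \<le> l" "l \<le> a + Suc d" for l
  proof (cases "l \<le> a + d")
    case True
    have "tf w'' l = incl M (b + d) (Suc (b + d)) (tf w' l)"
    proof -
      have "l - 1 < a + d" using True l by simp
      then show ?thesis using l lw' lY' by (simp add: w''_def cc_ql_def tf_def nth_append)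
    qed
    also have "\<dots> = ext M (tf w) a b (Suc d) l" using tw'[OF l(1) True] ext_incl[OF kw l(1) True] by simp
    finally show ?thesis .
  next
    case False
    then have "l = Suc (a + d)" using l by simp
    then show ?thesis using lw' lY' by (simp add: w''_def cc_ql_def tf_def nth_append ext_def add.commute)
  qed
  show ?case using mw'' lw'' tw'' a_def b_def d_def by auto
qed

end


context fwd begin

lemma tilde_Rc: assumes J: "(X, r) \<in> Ctf" shows "cc_ob M X" "r \<in> Rc M (length X - 1)"
proof -
  obtain s where ne: "X \<noteq> []" and m: "(butlast X, X, s) \<in> Mor" and ls: "length s = length X" and lr: "last s = r"
    using tilde_dest[OF J] by metis
  have h: "cc_hom M (butlast X) X s" using M1[OF m] by simp
  then show "cc_ob M X" unfolding cc_hom_def by simp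
  have "s \<noteq> []" using ls ne by auto
  then have "r = s ! (length X - 1)" using lr ls by (simp add: last_conv_nth)
  moreover have "length X - 1 < length s" using ls ne by simp
  ultimately show "r \<in> Rc M (length X - 1)" using h unfolding cc_hom_def by simp
qed

lemma f2: "G @ [T] \<in> C \<Longrightarrow> G \<in> C"
  using M5[of "G @ [T]"] by simp

lemma f3: "(G @ [R], r) \<in> Ctf \<Longrightarrow> G @ [R] \<in> C"
  by (erule tilde_dest) (use M1 in blast)

lemma f4: assumes GT: "G @ [T] \<in> C" and J: "(G @ D @ [R], r) \<in> Ctf"
  shows "(G @ [T] @ wk_seq M (length G) D @ [wk_L M (length G) (length G + length D) R],
         wk_R M (length G) (length G + length D) r) \<in> Ctf"
proof -
  define n where "n = length G"
  define d where "d = length D"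
  have p: "(G @ [T], G, cc_pl M (G @ [T])) \<in> Mor" using M5[OF GT] by (simp add: cc_p_def)
  have GD: "G @ D \<in> C"
    by (rule tilde_dest[OF J]) (use M1 in \<open>simp add: butlast_append\<close>)
  have kp: "kl_map M n (Suc n) (tf (cc_pl M (G @ [T])))"
    using cc_hom_kl[OF conjunct1[OF M1[OF p]]] n_def by simp
  have tp: "tf (cc_pl M (G @ [T])) l = eta M (Suc n) l" if "1 \<le> l" "l \<le> n" for l
    using that n_def by (simp add: tf_def)
  have ew: "ext M (tf (cc_pl M (G @ [T]))) n (Suc n) j l = wk_map M n (n + j) l" if "1 \<le> l" "l \<le> n + j" for j l
    using that tp incl_eta by (simp add: ext_def wk_map_def)
  obtain w' where mw': "(G @ [T] @ subs M (tf (cc_pl M (G @ [T]))) n (Suc n) D, G @ D, w') \<in> Mor"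
    and tw': "\<And>l. 1 \<le> l \<Longrightarrow> l \<le> n + d \<Longrightarrow> tf w' l = ext M (tf (cc_pl M (G @ [T]))) n (Suc n) d l"
    using Lift[OF p GD] n_def d_def by auto
  have "((G @ [T] @ subs M (tf (cc_pl M (G @ [T]))) n (Suc n) D) @ [rho M (n + d) (Suc (n + d)) (tf w') R],
       bnd M (n + d) (Suc (n + d)) (tf w') r) \<in> Ctf"
    using SecPB[OF mw', of R r] J n_def d_def by simp
  moreover have obGDR: "cc_ob M (G @ D @ [R])" using tilde_Rc[OF J] by simp
  have DL: "D ! j \<in> Lc M (n + j)" if j: "j < d" for j
    using cc_obD[OF obGDR, of "n + j"] j n_def d_def by (simp add: nth_append)
  have RL: "R \<in> Lc M (n + d)" using cc_obD[OF obGDR, of "n + d"] n_def d_def by (simp add: nth_append)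
  have rR: "r \<in> Rc M (n + d)" using tilde_Rc[OF J] n_def d_def by simp
  have kw': "kl_map M (n + d) (Suc (n + d)) (tf w')"
    using cc_hom_kl[OF conjunct1[OF M1[OF mw']]] n_def d_def by simp
  have "subs M (tf (cc_pl M (G @ [T]))) n (Suc n) D = wk_seq M n D"
  proof (rule nth_equalityI)
    show "length (subs M (tf (cc_pl M (G @ [T]))) n (Suc n) D) = length (wk_seq M n D)" by simp
    fix j assume "j < length (subs M (tf (cc_pl M (G @ [T]))) n (Suc n) D)"
    then have j: "j < d" using d_def by simp
    have ke: "kl_map M (n + j) (Suc (n + j)) (ext M (tf (cc_pl M (G @ [T]))) n (Suc n) j)"
      using kl_ext[OF kp, of j] by simp
    have "rho M (n + j) (Suc (n + j)) (ext M (tf (cc_pl M (G @ [T]))) n (Suc n) j) (D ! j) = wk_L M n (n + j) (D ! j)"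
      unfolding wk_L_def using rho_cong[OF ke kl_wk _ DL[OF j]] ew by simp
    then show "subs M (tf (cc_pl M (G @ [T]))) n (Suc n) D ! j = wk_seq M n D ! j" using j d_def by simp
  qed
  moreover have "rho M (n + d) (Suc (n + d)) (tf w') R = wk_L M n (n + d) R"
    unfolding wk_L_def using rho_cong[OF kw' kl_wk _ RL] tw' ew by simp
  moreover have "bnd M (n + d) (Suc (n + d)) (tf w') r = wk_R M n (n + d) r"
    unfolding wk_R_def using bnd_cong[OF kw' kl_wk _ rR] tw' ew by simp
  ultimately show ?thesis using n_def d_def by simp
qed

end


context fwd begin

lemma f5: assumes J1: "(G @ [S], s) \<in> Ctf" and J2: "(G @ [S] @ D @ [R], r) \<in> Ctf"
  shows "(G @ sb_seq M (length G) s D @ [sb_L M (length G) s (Suc (length G) + length D) R],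
         sb_R M (length G) s (Suc (length G) + length D) r) \<in> Ctf"
proof -
  define n where "n = length G"
  define d where "d = length D"
  obtain s0 where m0: "(G, G @ [S], s0) \<in> Mor" and ls0: "length s0 = Suc n"
    and s0i: "\<And>i. i < n \<Longrightarrow> s0 ! i = eta M n (Suc i)" and lst: "last s0 = s"
    using tilde_dest[OF J1] n_def by auto
  have sR: "s \<in> Rc M n" using tilde_Rc(2)[OF J1] n_def by simp
  have s0n: "s0 ! n = s" using lst ls0 by (metis diff_Suc_1 last_conv_nth length_0_conv nat.distinct(1))
  have GSD: "G @ [S] @ D \<in> C"
  proof (rule tilde_dest[OF J2])
    fix s' assume "(butlast (G @ [S] @ D @ [R]), G @ [S] @ D @ [R], s') \<in> Mor"
    then show "G @ [S] @ D \<in> C" using M1 by (simp add: butlast_append)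
  qed
  have k0: "kl_map M (Suc n) n (tf s0)" using cc_hom_kl[OF conjunct1[OF M1[OF m0]]] n_def by simp
  have es: "ext M (tf s0) (Suc n) n j l = sb_map M n s (Suc (n + j)) l" if l: "1 \<le> l" "l \<le> Suc (n + j)" for j l
  proof -
    consider "l \<le> n" | "l = Suc n" | "l > Suc n" by linarith
    then show ?thesis
    proof cases
      case 1
      then have "tf s0 l = eta M n l" using l s0i[of "l - 1"] by (simp add: tf_def)
      then show ?thesis using 1 l by (simp add: ext_def sb_map_def incl_eta)
    next
      case 2
      then have "tf s0 l = s" using s0n by (simp add: tf_def)
      then show ?thesis using 2 by (simp add: ext_def sb_map_def)
    next
      case 3
      then show ?thesis by (simp add: ext_def sb_map_def)
    qed
  qed
  have ksb: "kl_map M (Suc (n + j)) (n + j) (sb_map M n s (Suc (n + j)))" for j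
    using kl_sb[OF _ sR, of "Suc (n + j)"] by simp
  obtain w' where mw': "(G @ subs M (tf s0) (Suc n) n D, G @ [S] @ D, w') \<in> Mor"
    and tw': "\<And>l. 1 \<le> l \<Longrightarrow> l \<le> Suc n + d \<Longrightarrow> tf w' l = ext M (tf s0) (Suc n) n d l"
    using Lift[OF m0, of D] GSD n_def d_def by auto
  have "((G @ subs M (tf s0) (Suc n) n D) @ [rho M (Suc (n + d)) (n + d) (tf w') R],
       bnd M (Suc (n + d)) (n + d) (tf w') r) \<in> Ctf"
    using SecPB[OF mw', of R r] J2 n_def d_def by simp
  moreover have obGDR: "cc_ob M (G @ [S] @ D @ [R])" using tilde_Rc[OF J2] by simp
  have DL: "D ! j \<in> Lc M (Suc (n + j))" if j: "j < d" for j
    using cc_obD[OF obGDR, of "Suc (n + j)"] j n_def d_def by (simp add: nth_append)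
  have RL: "R \<in> Lc M (Suc (n + d))" using cc_obD[OF obGDR, of "Suc (n + d)"] n_def d_def by (simp add: nth_append)
  have rR: "r \<in> Rc M (Suc (n + d))" using tilde_Rc[OF J2] n_def d_def by simp
  have kw': "kl_map M (Suc (n + d)) (n + d) (tf w')"
    using cc_hom_kl[OF conjunct1[OF M1[OF mw']]] n_def d_def by simp
  have "subs M (tf s0) (Suc n) n D = sb_seq M n s D"
  proof (rule nth_equalityI)
    show "length (subs M (tf s0) (Suc n) n D) = length (sb_seq M n s D)" by simp
    fix j assume "j < length (subs M (tf s0) (Suc n) n D)"
    then have j: "j < d" using d_def by simp
    have ke: "kl_map M (Suc (n + j)) (n + j) (ext M (tf s0) (Suc n) n j)"
      using kl_ext[OF k0, of j] by simp
    have "rho M (Suc (n + j)) (n + j) (ext M (tf s0) (Suc n) n j) (D ! j) = sb_L M n s (Suc n + j) (D ! j)"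
      unfolding sb_L_def using rho_cong[OF ke ksb _ DL[OF j]] es by simp
    then show "subs M (tf s0) (Suc n) n D ! j = sb_seq M n s D ! j" using j d_def by simp
  qed
  moreover have "rho M (Suc (n + d)) (n + d) (tf w') R = sb_L M n s (Suc n + d) R"
    unfolding sb_L_def using rho_cong[OF kw' ksb _ RL] tw' es by simp
  moreover have "bnd M (Suc (n + d)) (n + d) (tf w') r = sb_R M n s (Suc n + d) r"
    unfolding sb_R_def using bnd_cong[OF kw' ksb _ rR] tw' es by simp
  ultimately show ?thesis using n_def d_def by simp
qed

lemma f6: assumes GT: "G @ [T] \<in> C"
  shows "(G @ [T, wk_L M (length G) (length G) T], eta M (Suc (length G)) (Suc (length G))) \<in> Ctf"
proof -
  define n where "n = length G"
  define X where "X = G @ [T]"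
  have mi: "(X, X, cc_id M X) \<in> Mor" using M2 GT X_def by simp
  have hi: "cc_hom M X X (cc_id M X)" using M1[OF mi] by simp
  have "(X @ [rho M n (Suc n) (tf (cc_pf M X X (cc_id M X))) (last X)], last (cc_id M X)) \<in> Ctf"
    using M7_tilde[OF mi] X_def n_def by simp
  moreover have "last (cc_id M X) = eta M (Suc n) (Suc n)"
  proof -
    have l: "length (cc_id M X) = Suc n" using X_def n_def by simp
    then have "cc_id M X \<noteq> []" by (intro notI) (simp del: length_cc_id)
    then have "last (cc_id M X) = cc_id M X ! n" using l by (simp add: last_conv_nth)
    then show ?thesis using X_def n_def by simp
  qed
  moreover have TL: "T \<in> Lc M n" using M2[OF GT] n_def by (simp add: cc_ob_snoc)
  have kpf: "kl_map M n (Suc n) (tf (cc_pf M X X (cc_id M X)))"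
  proof (rule kl_tf)
    fix i assume i: "i < n"
    then show "cc_pf M X X (cc_id M X) ! i \<in> Rc M (Suc n)"
      using nth_cc_pf[OF hi, of i] X_def n_def eta_in' by simp
  qed
  have "rho M n (Suc n) (tf (cc_pf M X X (cc_id M X))) T = wk_L M n n T"
    unfolding wk_L_def
  proof (rule rho_cong[OF kpf kl_wk _ TL])
    fix l assume l: "l \<in> {1..n}"
    then have "l - 1 < length X - 1" "Suc (l - 1) = l" using X_def n_def by auto
    then show "tf (cc_pf M X X (cc_id M X)) l = wk_map M n n l"
      using nth_cc_pf[OF hi, of "l - 1"] l X_def n_def by (simp add: tf_def wk_map_def)
  qed
  ultimately show ?thesis using X_def n_def by simp
qed

end


theorem proposition4p1:
  fixes M :: "('r, 'l) monmod"
    and C :: "'l list set"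
    and Ct :: "('l list \<times> 'r) set"
  assumes "fin_monad M" and "fin_module M"
    and "\<forall>G\<in>C. cc_ob M G"
    and "\<forall>(X, r)\<in>Ct. X \<noteq> [] \<and> cc_ob M X \<and> r \<in> Rc M (length X - 1)"
  shows "(\<exists>Mor. cc_subsystem M C Mor \<and> tilde_ob M Mor = Ct) \<longleftrightarrow>
    ([] \<in> C \<and>
     (\<forall>G T. G @ [T] \<in> C \<longrightarrow> G \<in> C) \<and>
     (\<forall>G R r. (G @ [R], r) \<in> Ct \<longrightarrow> G @ [R] \<in> C) \<and>
     (\<forall>G T D R r. G @ [T] \<in> C \<and> (G @ D @ [R], r) \<in> Ct \<longrightarrow>
        (G @ [T] @ wk_seq M (length G) D @ [wk_L M (length G) (length G + length D) R],
         wk_R M (length G) (length G + length D) r) \<in> Ct) \<and>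
     (\<forall>G S s D R r. (G @ [S], s) \<in> Ct \<and> (G @ [S] @ D @ [R], r) \<in> Ct \<longrightarrow>
        (G @ sb_seq M (length G) s D @ [sb_L M (length G) s (Suc (length G) + length D) R],
         sb_R M (length G) s (Suc (length G) + length D) r) \<in> Ct) \<and>
     (\<forall>G T. G @ [T] \<in> C \<longrightarrow>
        (G @ [T, wk_L M (length G) (length G) T], eta M (Suc (length G)) (Suc (length G))) \<in> Ct))"
proof
  assume "\<exists>Mor. cc_subsystem M C Mor \<and> tilde_ob M Mor = Ct"
  then obtain Mor where s: "cc_subsystem M C Mor" and t: "tilde_ob M Mor = Ct" by blast
  interpret F: fwd M C Mor using assms(1,2) s by (unfold_locales) auto
  show "[] \<in> C \<and>
     (\<forall>G T. G @ [T] \<in> C \<longrightarrow> G \<in> C) \<and>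
     (\<forall>G R r. (G @ [R], r) \<in> Ct \<longrightarrow> G @ [R] \<in> C) \<and>
     (\<forall>G T D R r. G @ [T] \<in> C \<and> (G @ D @ [R], r) \<in> Ct \<longrightarrow>
        (G @ [T] @ wk_seq M (length G) D @ [wk_L M (length G) (length G + length D) R],
         wk_R M (length G) (length G + length D) r) \<in> Ct) \<and>
     (\<forall>G S s D R r. (G @ [S], s) \<in> Ct \<and> (G @ [S] @ D @ [R], r) \<in> Ct \<longrightarrow>
        (G @ sb_seq M (length G) s D @ [sb_L M (length G) s (Suc (length G) + length D) R],
         sb_R M (length G) s (Suc (length G) + length D) r) \<in> Ct) \<and>
     (\<forall>G T. G @ [T] \<in> C \<longrightarrow>
        (G @ [T, wk_L M (length G) (length G) T], eta M (Suc (length G)) (Suc (length G))) \<in> Ct)"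
    unfolding t[symmetric]
    using F.M4 F.f2 F.f3 F.f4 F.f5 F.f6 by blast
next
  assume h: "[] \<in> C \<and>
     (\<forall>G T. G @ [T] \<in> C \<longrightarrow> G \<in> C) \<and>
     (\<forall>G R r. (G @ [R], r) \<in> Ct \<longrightarrow> G @ [R] \<in> C) \<and>
     (\<forall>G T D R r. G @ [T] \<in> C \<and> (G @ D @ [R], r) \<in> Ct \<longrightarrow>
        (G @ [T] @ wk_seq M (length G) D @ [wk_L M (length G) (length G + length D) R],
         wk_R M (length G) (length G + length D) r) \<in> Ct) \<and>
     (\<forall>G S s D R r. (G @ [S], s) \<in> Ct \<and> (G @ [S] @ D @ [R], r) \<in> Ct \<longrightarrow>
        (G @ sb_seq M (length G) s D @ [sb_L M (length G) s (Suc (length G) + length D) R],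
         sb_R M (length G) s (Suc (length G) + length D) r) \<in> Ct) \<and>
     (\<forall>G T. G @ [T] \<in> C \<longrightarrow>
        (G @ [T, wk_L M (length G) (length G) T], eta M (Suc (length G)) (Suc (length G))) \<in> Ct)"
  interpret B: bwd M C Ct
  proof (unfold_locales)
    show "fin_monad M" "fin_module M" by fact+
    show "\<And>G. G \<in> C \<Longrightarrow> cc_ob M G" using assms(3) by blast
    show "\<And>X r. (X, r) \<in> Ct \<Longrightarrow> X \<noteq> [] \<and> cc_ob M X \<and> r \<in> Rc M (length X - 1)" using assms(4) by blast
  qed (use h in blast)+
  show "\<exists>Mor. cc_subsystem M C Mor \<and> tilde_ob M Mor = Ct" using B.bwd_main .
qed


end
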